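(* Let $\{a_n\}$ be positive with $a_n\to\infty$, let $\{\xi^n\}_{n\in\mathbb{N}}$ be an $\mathcal{M}(\Delta)$-valued process and fix $l\in\mathbb{N}$. Assume that for every finite family $\mathcal{P}=\{(s_i,t_i)\}_{i=1}^h$ with $0\le s_i<t_i<\infty$ the $\mathbb{R}^h$-valued process $\{(\xi^n([0,s_i]\times(t_i,\infty]))_{i=1}^h\}_{n}$ satisfies an LDP with speed $a_n$ and good rate function $I_\mathcal{P}$. Then $\{\mathrm{hist}_l(\xi^n)\}_{n\in\mathbb{N}}$ satisfies an LDP in $\mathbb{R}^{\mathcal{I}_l}$ with speed $a_n$ and a good rate function $I_l$. Moreover: (1) if every $I_\mathcal{P}$ has a unique zero, so does $I_l$; (2) if every $I_\mathcal{P}$ is convex and $\sup_n a_n^{-1}\log\mathbb{E}[\exp(a_n\sum_{I\in\mathcal{I}_l}\lambda_I\xi^n(I))]<\infty$ for every $\lambda=(\lambda_I)\in\mathbb{R}^{\mathcal{I}_l}$, then for every such $\lambda$ the limit $\varphi_l(\lambda)=\lim_{n\to\infty}a_n^{-1}\log\mathbb{E}[\exp(a_n\sum_{I\in\mathcal{I}_l}\lambda_I\xi^n(I))]$ exists in $\mathbb{R}$ and $I_l=\varphi_l^*$.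
   Context: $\Delta=\{(s,t)\in[0,\infty]^2:0\le s<t\le\infty\}$ (homeomorphic to $\{(x,y):0\le x<y\le1\}$); $\mathcal{M}(\Delta)$ the Radon measures on $\Delta$ with the vague topology. For $l\in\mathbb{N}$, $\mathcal{I}_l$ is the set of rectangles $[0,2^{-(l+1)}]\times((j-1)2^{-(l+1)},j2^{-(l+1)}]$ for integers $3\le j\le l2^{l+1}$, together with $((i-1)2^{-(l+1)},i2^{-(l+1)}]\times((j-1)2^{-(l+1)},j2^{-(l+1)}]$ for integers $2\le i\le j\le l2^{l+1}$ with $j-i\ge2$. The histogram of $\xi\in\mathcal{M}(\Delta)$ with fineness $l$ is $\mathrm{hist}_l(\xi)=(\xi(I))_{I\in\mathcal{I}_l}\in\mathbb{R}^{\mathcal{I}_l}$. $\varphi_l^*(x)=\sup_{\lambda}\{\langle\lambda,x\rangle-\varphi_l(\lambda)\}$. LDP, speed, good rate function as standard. *)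

theory Defs
  imports "HOL-Probability.Probability"
begin

text \<open>[0,\<infinity>] is modelled inside the extended reals; Delta = {(s,t). 0 \<le> s < t \<le> \<infinity>}.\<close>

definition Delta :: "(ereal \<times> ereal) set" where
  "Delta = {(s, t). 0 \<le> s \<and> s < t}"

definition radon_on_Delta :: "(ereal \<times> ereal) measure \<Rightarrow> bool" where
  "radon_on_Delta \<mu> \<longleftrightarrow>
     sets \<mu> = sets (restrict_space borel Delta) \<and>
     (\<forall>K. compact K \<and> K \<subseteq> Delta \<longrightarrow> emeasure \<mu> K < \<infinity>)"

text \<open>An M(Delta)-valued process: for each n a random Radon measure on a probability
  space M n, measurable for the vague Borel sigma-algebra, i.e. all evaluation maps
  \<omega> \<mapsto> \<xi> n \<omega> A (A Borel) are measurable.\<close>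
definition random_radon_process ::
  "(nat \<Rightarrow> 'w measure) \<Rightarrow> (nat \<Rightarrow> 'w \<Rightarrow> (ereal \<times> ereal) measure) \<Rightarrow> bool" where
  "random_radon_process M \<xi> \<longleftrightarrow>
     (\<forall>n. prob_space (M n)) \<and>
     (\<forall>n. \<forall>\<omega>\<in>space (M n). radon_on_Delta (\<xi> n \<omega>)) \<and>
     (\<forall>n A. A \<in> sets (restrict_space borel Delta) \<longrightarrow>
        (\<lambda>\<omega>. emeasure (\<xi> n \<omega> ) A) \<in> borel_measurable (M n))"

definition corner :: "real \<Rightarrow> real \<Rightarrow> (ereal \<times> ereal) set" where
  "corner s t = {(x, y). 0 \<le> x \<and> x \<le> ereal s \<and> ereal t < y}"

definition Ilset :: "nat \<Rightarrow> (ereal \<times> ereal) set set" where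
  "Ilset l =
    (let d = (1/2::real) ^ (l + 1) in
     {{ereal 0 .. ereal d} \<times> {ereal ((real j - 1) * d) <.. ereal (real j * d)} | j::nat.
        3 \<le> j \<and> j \<le> l * 2 ^ (l + 1)}
     \<union> {{ereal ((real i - 1) * d) <.. ereal (real i * d)} \<times>
         {ereal ((real j - 1) * d) <.. ereal (real j * d)} | i j :: nat.
        2 \<le> i \<and> i \<le> j \<and> j \<le> l * 2 ^ (l + 1) \<and> j - i \<ge> 2})"

definition hist :: "nat \<Rightarrow> (ereal \<times> ereal) measure \<Rightarrow> ((ereal \<times> ereal) set \<Rightarrow> real)" where
  "hist l \<xi> = (\<lambda>I\<in>Ilset l. measure \<xi> I)"

definition corner_vec :: "(real \<times> real) list \<Rightarrow> (ereal \<times> ereal) measure \<Rightarrow> (nat \<Rightarrow> real)" where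
  "corner_vec ps \<xi> = (\<lambda>i\<in>{..<length ps}. measure \<xi> (corner (fst (ps ! i)) (snd (ps ! i))))"

text \<open>R^J for a finite index set J: extensional functions J \<rightarrow> real with the product topology.\<close>
abbreviation Rpow :: "'i set \<Rightarrow> ('i \<Rightarrow> real) topology" where
  "Rpow J \<equiv> product_topology (\<lambda>_. euclideanreal) J"

definition elog :: "real \<Rightarrow> ereal" where
  "elog p = (if p = 0 then -\<infinity> else ereal (ln p))"

definition elog_enn :: "ennreal \<Rightarrow> ereal" where
  "elog_enn x = (if x = \<infinity> then \<infinity> else elog (enn2real x))"

definition good_rate_function :: "'a topology \<Rightarrow> ('a \<Rightarrow> ereal) \<Rightarrow> bool" where
  "good_rate_function X I \<longleftrightarrow>
     (\<forall>x\<in>topspace X. 0 \<le> I x) \<and>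
     (\<forall>c::real. closedin X {x\<in>topspace X. I x \<le> ereal c}) \<and>
     (\<forall>c::real. compactin X {x\<in>topspace X. I x \<le> ereal c})"

definition LDP :: "'a topology \<Rightarrow> (nat \<Rightarrow> real) \<Rightarrow> (nat \<Rightarrow> 'w measure) \<Rightarrow>
    (nat \<Rightarrow> 'w \<Rightarrow> 'a) \<Rightarrow> ('a \<Rightarrow> ereal) \<Rightarrow> bool" where
  "LDP X a M Z I \<longleftrightarrow>
     (\<forall>n. \<forall>\<omega>\<in>space (M n). Z n \<omega> \<in> topspace X) \<and>
     (\<forall>n U. openin X U \<longrightarrow> {\<omega>\<in>space (M n). Z n \<omega> \<in> U} \<in> sets (M n)) \<and>
     (\<forall>F. closedin X F \<longrightarrow>
        limsup (\<lambda>n. ereal (1 / a n) * elog (measure (M n) {\<omega>\<in>space (M n). Z n \<omega> \<in> F}))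
          \<le> - (INF x\<in>F. I x)) \<and>
     (\<forall>G. openin X G \<longrightarrow>
        - (INF x\<in>G. I x)
          \<le> liminf (\<lambda>n. ereal (1 / a n) * elog (measure (M n) {\<omega>\<in>space (M n). Z n \<omega> \<in> G})))"

definition LDP_good :: "'a topology \<Rightarrow> (nat \<Rightarrow> real) \<Rightarrow> (nat \<Rightarrow> 'w measure) \<Rightarrow>
    (nat \<Rightarrow> 'w \<Rightarrow> 'a) \<Rightarrow> ('a \<Rightarrow> ereal) \<Rightarrow> bool" where
  "LDP_good X a M Z I \<longleftrightarrow> good_rate_function X I \<and> LDP X a M Z I"

definition unique_zero :: "'a topology \<Rightarrow> ('a \<Rightarrow> ereal) \<Rightarrow> bool" where
  "unique_zero X I \<longleftrightarrow> (\<exists>!x. x \<in> topspace X \<and> I x = 0)"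

definition convex_on_Rpow :: "'i set \<Rightarrow> (('i \<Rightarrow> real) \<Rightarrow> ereal) \<Rightarrow> bool" where
  "convex_on_Rpow J I \<longleftrightarrow>
     (\<forall>x\<in>J \<rightarrow>\<^sub>E UNIV. \<forall>y\<in>J \<rightarrow>\<^sub>E UNIV. \<forall>t::real. 0 < t \<and> t < 1 \<longrightarrow>
        I (\<lambda>i\<in>J. t * x i + (1 - t) * y i) \<le> ereal t * I x + ereal (1 - t) * I y)"

definition scgf :: "(nat \<Rightarrow> real) \<Rightarrow> (nat \<Rightarrow> 'w measure) \<Rightarrow> (nat \<Rightarrow> 'w \<Rightarrow> ('i \<Rightarrow> real)) \<Rightarrow>
    'i set \<Rightarrow> nat \<Rightarrow> ('i \<Rightarrow> real) \<Rightarrow> ereal" where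
  "scgf a M Z J n lam =
     ereal (1 / a n) *
       elog_enn (\<integral>\<^sup>+ \<omega>. ennreal (exp (a n * (\<Sum>i\<in>J. lam i * Z n \<omega> i))) \<partial>M n)"

end

theory Submission
  imports Defs
begin


lemma rate_attain:
  assumes good: "good_rate_function X I" and S: "closedin X S"
    and fin: "(INF x\<in>S. I x) < \<infinity>"
  shows "\<exists>x\<in>S. I x = (INF x\<in>S. I x)"
proof -
  define m where "m = (INF x\<in>S. I x)"
  have Stop: "S \<subseteq> topspace X" using S closedin_subset by auto
  have nn: "\<And>x. x \<in> topspace X \<Longrightarrow> 0 \<le> I x" using good unfolding good_rate_function_def by auto
  define K where "K c = S \<inter> {x\<in>topspace X. I x \<le> ereal c}" for c :: real
  have Kcl: "closedin X (K c)" for c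
    unfolding K_def using good S unfolding good_rate_function_def by (intro closedin_Int) auto
  have Kcp: "compactin X (K c)" for c
  proof -
    have "compactin X {x\<in>topspace X. I x \<le> ereal c}" using good unfolding good_rate_function_def by auto
    then show ?thesis by (rule closed_compactin[OF _ _ Kcl]) (auto simp: K_def)
  qed
  have Kne: "K c \<noteq> {}" if "m < ereal c" for c
  proof -
    from that obtain x where "x \<in> S" "I x < ereal c" unfolding m_def by (auto simp: INF_less_iff)
    then show ?thesis using Stop unfolding K_def by (auto intro: less_imp_le)
  qed
  have mono: "K c \<subseteq> K d" if "c \<le> d" for c d
    using that unfolding K_def by (auto intro: order_trans)
  obtain c0 where c0: "m < ereal c0"
    using fin unfolding m_def[symmetric] by (cases m) (auto, metis less_add_one)
  define U where "U = {K c | c. m < ereal c}"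
  have "K c0 \<inter> \<Inter>U \<noteq> {}"
  proof -
    have "\<forall>C\<in>U. closedin X C" unfolding U_def using Kcl by auto
    moreover have "K c0 \<inter> \<Inter>F \<noteq> {}" if "finite F" "F \<subseteq> U" for F
    proof -
      from that have "\<exists>c. m < ereal c \<and> c \<le> c0 \<and> (\<forall>C\<in>F. K c \<subseteq> C)"
      proof (induction F rule: finite_induct)
        case empty then show ?case using c0 by auto
      next
        case (insert C F)
        then obtain c where c: "m < ereal c" "c \<le> c0" "\<forall>C\<in>F. K c \<subseteq> C" by auto
        from insert obtain d where d: "C = K d" "m < ereal d" unfolding U_def by auto
        show ?case
        proof (intro exI[of _ "min c d"] conjI ballI)
          show "m < ereal (min c d)" using c d by (auto simp: min_def)
          show "min c d \<le> c0" using c by auto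
          fix C' assume "C' \<in> insert C F"
          moreover have "K (min c d) \<subseteq> K c" "K (min c d) \<subseteq> K d" using mono by auto
          ultimately show "K (min c d) \<subseteq> C'" using c(3) d(1) by blast
        qed
      qed
      then obtain c where "m < ereal c" "c \<le> c0" "\<forall>C\<in>F. K c \<subseteq> C" by auto
      then have "K c \<subseteq> K c0 \<inter> \<Inter>F" using mono by auto
      then show ?thesis using Kne[OF \<open>m < ereal c\<close>] by blast
    qed
    ultimately show ?thesis using Kcp[of c0] unfolding compactin_fip by blast
  qed
  then obtain x where x: "x \<in> K c0" "\<And>C. C \<in> U \<Longrightarrow> x \<in> C" by auto
  have "I x \<le> m"
  proof (rule dense_ge)
    fix e assume "m < e"
    show "I x \<le> e"
    proof (cases e)
      case (real c)
      then have "x \<in> K c" using x(2) \<open>m < e\<close> unfolding U_def by auto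
      then show ?thesis unfolding K_def real by auto
    qed (use \<open>m < e\<close> in auto)
  qed
  moreover have "x \<in> S" using x(1) unfolding K_def by auto
  moreover then have "m \<le> I x" unfolding m_def by (rule INF_lower)
  ultimately show ?thesis unfolding m_def by (intro bexI[of _ x]) auto
qed



lemma fiber_closed:
  assumes f: "continuous_map X Y f" and H: "Hausdorff_space Y"
  shows "closedin X {x\<in>topspace X. f x = y}"
proof (cases "y \<in> topspace Y")
  case True
  have "closedin Y {y}" using True H by (simp add: Hausdorff_imp_t1_space closedin_t1_singleton)
  from closedin_continuous_map_preimage[OF f this] show ?thesis by simp
next
  case False
  then have "{x\<in>topspace X. f x = y} = {}"
    using continuous_map_image_subset_topspace[OF f] by auto
  then show ?thesis by (metis closedin_empty)
qed

lemma contraction: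
  assumes ldp: "LDP_good X a M Z I" and f: "continuous_map X Y f"
    and H: "Hausdorff_space Y"
    and Z': "\<And>n \<omega>. \<omega> \<in> space (M n) \<Longrightarrow> Z' n \<omega> = f (Z n \<omega>)"
  shows "LDP_good Y a M Z' (\<lambda>y. INF x\<in>{x\<in>topspace X. f x = y}. I x)"
proof -
  define J where "J y = (INF x\<in>{x\<in>topspace X. f x = y}. I x)" for y
  have good: "good_rate_function X I" and L: "LDP X a M Z I" using ldp unfolding LDP_good_def by auto
  have fimg: "f x \<in> topspace Y" if "x \<in> topspace X" for x
    using continuous_map_image_subset_topspace[OF f] that by auto
  have Jle: "J (f x) \<le> I x" if "x \<in> topspace X" for x
    unfolding J_def using that by (intro INF_lower) auto
  have Jatt: "\<exists>x\<in>topspace X. f x = y \<and> I x = J y" if "J y < \<infinity>" for y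
    using rate_attain[OF good fiber_closed[OF f H, of y]] that unfolding J_def by auto
  have lev: "{y\<in>topspace Y. J y \<le> ereal c} = f ` {x\<in>topspace X. I x \<le> ereal c}" for c
  proof
    show "{y\<in>topspace Y. J y \<le> ereal c} \<subseteq> f ` {x\<in>topspace X. I x \<le> ereal c}"
    proof
      fix y assume y: "y \<in> {y\<in>topspace Y. J y \<le> ereal c}"
      then have "J y < \<infinity>" by (auto simp: le_less_trans)
      then obtain x where "x \<in> topspace X" "f x = y" "I x = J y" using Jatt by blast
      then show "y \<in> f ` {x\<in>topspace X. I x \<le> ereal c}" using y by auto
    qed
    show "f ` {x\<in>topspace X. I x \<le> ereal c} \<subseteq> {y\<in>topspace Y. J y \<le> ereal c}"
      using Jle fimg by (auto intro: order_trans)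
  qed
  have goodJ: "good_rate_function Y J"
    unfolding good_rate_function_def
  proof (intro conjI ballI allI)
    fix y assume "y \<in> topspace Y"
    show "0 \<le> J y" unfolding J_def using good unfolding good_rate_function_def
      by (auto intro: INF_greatest)
  next
    fix c :: real
    have "compactin X {x\<in>topspace X. I x \<le> ereal c}" using good unfolding good_rate_function_def by auto
    from image_compactin[OF this f] show cp: "compactin Y {y\<in>topspace Y. J y \<le> ereal c}"
      unfolding lev .
    show "closedin Y {y\<in>topspace Y. J y \<le> ereal c}"
      using compactin_imp_closedin[OF H cp] .
  qed
  have INFeq: "(INF x\<in>{x\<in>topspace X. f x \<in> F}. I x) = (INF y\<in>F. J y)" if "F \<subseteq> topspace Y" for F
  proof (rule antisym)
    show "(INF x\<in>{x\<in>topspace X. f x \<in> F}. I x) \<le> (INF y\<in>F. J y)"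
    proof (rule INF_greatest)
      fix y assume "y \<in> F"
      then show "(INF x\<in>{x\<in>topspace X. f x \<in> F}. I x) \<le> J y"
        unfolding J_def by (intro INF_mono) auto
    qed
    show "(INF y\<in>F. J y) \<le> (INF x\<in>{x\<in>topspace X. f x \<in> F}. I x)"
    proof (rule INF_greatest)
      fix x assume "x \<in> {x\<in>topspace X. f x \<in> F}"
      then show "(INF y\<in>F. J y) \<le> I x"
        using Jle[of x] by (auto intro: order_trans[OF INF_lower])
    qed
  qed
  have ev: "{\<omega>\<in>space (M n). Z' n \<omega> \<in> F} = {\<omega>\<in>space (M n). Z n \<omega> \<in> {x\<in>topspace X. f x \<in> F}}" for n F
    using L Z' unfolding LDP_def by auto
  have L1: "\<And>n \<omega>. \<omega> \<in> space (M n) \<Longrightarrow> Z n \<omega> \<in> topspace X"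
    and L2: "\<And>n U. openin X U \<Longrightarrow> {\<omega>\<in>space (M n). Z n \<omega> \<in> U} \<in> sets (M n)"
    and L3: "\<And>F. closedin X F \<Longrightarrow> limsup (\<lambda>n. ereal (1 / a n) * elog (measure (M n) {\<omega>\<in>space (M n). Z n \<omega> \<in> F})) \<le> - (INF x\<in>F. I x)"
    and L4: "\<And>G. openin X G \<Longrightarrow> - (INF x\<in>G. I x) \<le> liminf (\<lambda>n. ereal (1 / a n) * elog (measure (M n) {\<omega>\<in>space (M n). Z n \<omega> \<in> G}))"
    using L unfolding LDP_def by auto
  have "LDP Y a M Z' J"
    unfolding LDP_def
  proof (intro conjI allI impI ballI)
    fix n \<omega> assume "\<omega> \<in> space (M n)"
    then show "Z' n \<omega> \<in> topspace Y" using L Z' fimg unfolding LDP_def by auto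
  next
    fix n U assume "openin Y U"
    then have "openin X {x\<in>topspace X. f x \<in> U}" by (rule openin_continuous_map_preimage[OF f])
    then show "{\<omega>\<in>space (M n). Z' n \<omega> \<in> U} \<in> sets (M n)" unfolding ev by (rule L2)
  next
    fix F assume F: "closedin Y F"
    then have "closedin X {x\<in>topspace X. f x \<in> F}" by (rule closedin_continuous_map_preimage[OF f])
    then show "limsup (\<lambda>n. ereal (1 / a n) * elog (measure (M n) {\<omega>\<in>space (M n). Z' n \<omega> \<in> F})) \<le> - (INF x\<in>F. J x)"
      unfolding ev INFeq[OF closedin_subset[OF F], symmetric] by (rule L3)
  next
    fix F assume F: "openin Y F"
    then have "openin X {x\<in>topspace X. f x \<in> F}" by (rule openin_continuous_map_preimage[OF f])
    then show "- (INF x\<in>F. J x) \<le> liminf (\<lambda>n. ereal (1 / a n) * elog (measure (M n) {\<omega>\<in>space (M n). Z' n \<omega> \<in> F}))"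
      unfolding ev INFeq[OF openin_subset[OF F], symmetric] by (rule L4)
  qed
  then show ?thesis using goodJ unfolding LDP_good_def J_def by auto
qed



lemma contraction_unique_zero:
  assumes good: "good_rate_function X I" and f: "continuous_map X Y f"
    and H: "Hausdorff_space Y" and uz: "unique_zero X I"
  shows "unique_zero Y (\<lambda>y. INF x\<in>{x\<in>topspace X. f x = y}. I x)"
proof -
  define J where "J y = (INF x\<in>{x\<in>topspace X. f x = y}. I x)" for y
  have nn: "\<And>x. x \<in> topspace X \<Longrightarrow> 0 \<le> I x" using good unfolding good_rate_function_def by auto
  obtain x0 where x0: "x0 \<in> topspace X" "I x0 = 0" "\<And>x. x \<in> topspace X \<Longrightarrow> I x = 0 \<Longrightarrow> x = x0"
    using uz unfolding unique_zero_def by auto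
  have fimg: "f x \<in> topspace Y" if "x \<in> topspace X" for x
    using continuous_map_image_subset_topspace[OF f] that by auto
  have Jnn: "0 \<le> J y" for y unfolding J_def using nn by (auto intro: INF_greatest)
  have "J (f x0) \<le> I x0" unfolding J_def using x0(1) by (intro INF_lower) auto
  then have J0: "J (f x0) = 0" using Jnn[of "f x0"] x0(2) by auto
  have uniq: "y = f x0" if "y \<in> topspace Y" "J y = 0" for y
  proof -
    have "\<exists>x\<in>{x\<in>topspace X. f x = y}. I x = J y"
      using rate_attain[OF good fiber_closed[OF f H, of y]] that unfolding J_def by auto
    then obtain x where x: "x \<in> topspace X" "f x = y" "I x = J y" by auto
    then have "x = x0" using x0(3)[OF x(1)] that(2) by simp
    then show ?thesis using x(2) by simp
  qed
  show ?thesis unfolding unique_zero_def J_def[symmetric]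
    using J0 uniq fimg[OF x0(1)] by blast
qed

lemma contraction_convex:
  assumes good: "good_rate_function (Rpow K) I"
    and f: "continuous_map (Rpow K) (Rpow JJ) f"
    and cv: "convex_on_Rpow K I"
    and lin: "\<And>x y t. x \<in> K \<rightarrow>\<^sub>E UNIV \<Longrightarrow> y \<in> K \<rightarrow>\<^sub>E UNIV \<Longrightarrow>
        f (\<lambda>i\<in>K. t * x i + (1 - t) * y i) = (\<lambda>i\<in>JJ. t * f x i + (1 - t) * f y i)"
  shows "convex_on_Rpow JJ (\<lambda>y. INF x\<in>{x\<in>topspace (Rpow K). f x = y}. I x)"
proof -
  define J where "J y = (INF x\<in>{x\<in>topspace (Rpow K). f x = y}. I x)" for y
  have H: "Hausdorff_space (Rpow JJ)" by (simp add: Hausdorff_space_product_topology)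
  have nn: "\<And>x. x \<in> topspace (Rpow K) \<Longrightarrow> 0 \<le> I x" using good unfolding good_rate_function_def by auto
  have Jnn: "0 \<le> J y" for y unfolding J_def using nn by (auto intro: INF_greatest)
  have Jatt: "\<exists>x\<in>topspace (Rpow K). f x = y \<and> I x = J y" if "J y < \<infinity>" for y
    using rate_attain[OF good fiber_closed[OF f H, of y]] that unfolding J_def by auto
  show ?thesis unfolding convex_on_Rpow_def J_def[symmetric]
  proof (intro ballI allI impI)
    fix y y' :: "_ \<Rightarrow> real" and t :: real
    assume y: "y \<in> JJ \<rightarrow>\<^sub>E UNIV" and y': "y' \<in> JJ \<rightarrow>\<^sub>E UNIV" and t: "0 < t \<and> t < 1"
    show "J (\<lambda>i\<in>JJ. t * y i + (1 - t) * y' i) \<le> ereal t * J y + ereal (1 - t) * J y'"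
    proof (cases "J y < \<infinity> \<and> J y' < \<infinity>")
      case False
      have n1: "ereal t * J y \<noteq> -\<infinity>" "ereal (1 - t) * J y' \<noteq> -\<infinity>"
        using t Jnn[of y] Jnn[of y'] by (cases "J y"; simp; cases "J y'"; simp)+
      have "ereal t * J y = \<infinity> \<or> ereal (1 - t) * J y' = \<infinity>"
        using False t by auto
      then have eqinf: "ereal t * J y + ereal (1 - t) * J y' = \<infinity>"
        using n1 by auto
      show ?thesis unfolding eqinf by simp
    next
      case True
      then obtain x x' where x: "x \<in> topspace (Rpow K)" "f x = y" "I x = J y"
        and x': "x' \<in> topspace (Rpow K)" "f x' = y'" "I x' = J y'" using Jatt by meson
      have xK: "x \<in> K \<rightarrow>\<^sub>E UNIV" "x' \<in> K \<rightarrow>\<^sub>E UNIV" using x x' by auto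
      have "J (\<lambda>i\<in>JJ. t * y i + (1 - t) * y' i) \<le> I (\<lambda>i\<in>K. t * x i + (1 - t) * x' i)"
        unfolding J_def using lin[OF xK, of t] x x' by (intro INF_lower) auto
      also have "\<dots> \<le> ereal t * I x + ereal (1 - t) * I x'"
        using cv xK t unfolding convex_on_Rpow_def by blast
      finally show ?thesis using x x' by simp
    qed
  qed
qed



definition epi :: "'i set \<Rightarrow> (('i \<Rightarrow> real) \<Rightarrow> ereal) \<Rightarrow> (('i \<Rightarrow> real) \<times> real) set" where
  "epi JJ J = {(y, t). y \<in> JJ \<rightarrow>\<^sub>E UNIV \<and> J y \<le> ereal t}"

lemma epi_closed:
  assumes good: "good_rate_function (Rpow JJ) J"
  shows "closedin (prod_topology (Rpow JJ) euclideanreal) (epi JJ J)"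
proof -
  let ?X = "prod_topology (Rpow JJ) euclideanreal"
  have sub: "epi JJ J \<subseteq> topspace ?X" by (auto simp: epi_def)
  have "openin ?X (topspace ?X - epi JJ J)"
  proof (subst openin_subopen, intro ballI)
    fix p assume p: "p \<in> topspace ?X - epi JJ J"
    obtain y t where pyt: "p = (y, t)" by (cases p)
    have y: "y \<in> JJ \<rightarrow>\<^sub>E UNIV" and lt: "ereal t < J y" using p by (auto simp: epi_def pyt)
    obtain r where r: "ereal t < ereal r" "ereal r < J y" using ereal_dense2[OF lt] by auto
    define T where "T = (topspace (Rpow JJ) - {x\<in>topspace (Rpow JJ). J x \<le> ereal r}) \<times> {..<r}"
    have lev: "closedin (Rpow JJ) {x\<in>topspace (Rpow JJ). J x \<le> ereal r}"
      using good unfolding good_rate_function_def by blast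
    have o1: "openin (Rpow JJ) (topspace (Rpow JJ) - {x\<in>topspace (Rpow JJ). J x \<le> ereal r})"
      by (rule openin_diff[OF openin_topspace lev])
    have o2: "openin euclideanreal {..<r}" by simp
    have "openin ?X T" unfolding T_def using o1 o2 openin_prod_Times_iff by blast
    moreover have "p \<in> T" using y r by (auto simp: T_def pyt)
    moreover have "T \<subseteq> topspace ?X - epi JJ J"
    proof
      fix q assume "q \<in> T"
      then obtain y' s where q: "q = (y', s)" "y' \<in> JJ \<rightarrow>\<^sub>E UNIV" "\<not> J y' \<le> ereal r" "s < r"
        by (auto simp: T_def)
      have r1: "ereal s < ereal r" using q(4) by simp
      have r2: "ereal r < J y'" using q(3) by (simp add: not_le)
      have "ereal s < J y'" using r1 r2 by (rule less_trans)
      then show "q \<in> topspace ?X - epi JJ J" using q by (auto simp: epi_def)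
    qed
    ultimately show "\<exists>T. openin ?X T \<and> p \<in> T \<and> T \<subseteq> topspace ?X - epi JJ J" by blast
  qed
  then show ?thesis using sub by (simp add: closedin_def)
qed

lemma epi_trunc_compact:
  assumes good: "good_rate_function (Rpow JJ) J"
  shows "compactin (prod_topology (Rpow JJ) euclideanreal) (epi JJ J \<inter> (topspace (Rpow JJ) \<times> {..T}))"
proof -
  let ?X = "prod_topology (Rpow JJ) euclideanreal"
  have nn: "\<And>x. x \<in> topspace (Rpow JJ) \<Longrightarrow> 0 \<le> J x" using good unfolding good_rate_function_def by auto
  have cp: "compactin ?X ({x\<in>topspace (Rpow JJ). J x \<le> ereal T} \<times> {0..T})"
    unfolding compactin_Times using good unfolding good_rate_function_def by auto
  have cl: "closedin ?X (epi JJ J \<inter> (topspace (Rpow JJ) \<times> {..T}))"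
  proof (intro closedin_Int epi_closed[OF good])
    have "closedin euclideanreal {..T}" by simp
    then show "closedin ?X (topspace (Rpow JJ) \<times> {..T})"
      using closedin_topspace[of "Rpow JJ"] closedin_prod_Times_iff by blast
  qed
  have sub: "epi JJ J \<inter> (topspace (Rpow JJ) \<times> {..T}) \<subseteq> {x\<in>topspace (Rpow JJ). J x \<le> ereal T} \<times> {0..T}"
  proof
    fix p assume "p \<in> epi JJ J \<inter> (topspace (Rpow JJ) \<times> {..T})"
    then obtain y t where p: "p = (y,t)" "y \<in> JJ \<rightarrow>\<^sub>E UNIV" "J y \<le> ereal t" "t \<le> T" by (auto simp: epi_def)
    then have "0 \<le> J y" using nn by auto
    then have "0 \<le> t" using p by (metis ereal_less_eq(5) order_trans)
    moreover have "J y \<le> ereal T" using p by (meson ereal_less_eq(3) order_trans)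
    ultimately show "p \<in> {x\<in>topspace (Rpow JJ). J x \<le> ereal T} \<times> {0..T}" using p by auto
  qed
  show ?thesis by (rule closed_compactin[OF cp sub cl])
qed



definition Dist :: "'i set \<Rightarrow> ('i \<Rightarrow> real) \<Rightarrow> real \<Rightarrow> ('i \<Rightarrow> real) \<times> real \<Rightarrow> real" where
  "Dist JJ x0 c p = (\<Sum>i\<in>JJ. (fst p i - x0 i) * (fst p i - x0 i)) + (snd p - c) * (snd p - c)"

lemma Dist_cont: "continuous_map (prod_topology (Rpow JJ) euclideanreal) euclideanreal (Dist JJ x0 c)"
  if fin: "finite JJ"
proof -
  have pr: "continuous_map (prod_topology (Rpow JJ) euclideanreal) euclideanreal (\<lambda>p. fst p i)" if "i \<in> JJ" for i
    using continuous_map_compose[OF continuous_map_fst continuous_map_product_projection[OF that]]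
    by (simp add: o_def)
  show ?thesis unfolding Dist_def
    by (intro continuous_map_add continuous_map_sum continuous_map_real_mult continuous_map_diff pr
        continuous_map_snd continuous_map_const[THEN iffD2]) (auto simp: fin)
qed

lemma epi_min:
  assumes fin: "finite JJ" and good: "good_rate_function (Rpow JJ) J"
    and y1: "y1 \<in> topspace (Rpow JJ)" "J y1 < \<infinity>"
  shows "\<exists>p\<in>epi JJ J. \<forall>e\<in>epi JJ J. Dist JJ x0 c p \<le> Dist JJ x0 c e"
proof -
  let ?X = "prod_topology (Rpow JJ) euclideanreal"
  let ?D = "Dist JJ x0 c"
  have nn: "\<And>x. x \<in> topspace (Rpow JJ) \<Longrightarrow> 0 \<le> J x" using good unfolding good_rate_function_def by auto
  define t1 where "t1 = real_of_ereal (J y1)"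
  have Jy1: "J y1 = ereal t1" using y1 nn[OF y1(1)] unfolding t1_def by (cases "J y1") auto
  have e1: "(y1, t1) \<in> epi JJ J" using y1 Jy1 by (auto simp: epi_def)
  define R where "R = ?D (y1, t1)"
  have Dnn: "0 \<le> (\<Sum>i\<in>JJ. (fst p i - x0 i) * (fst p i - x0 i))" for p
    by (intro sum_nonneg) auto
  have Dge: "(snd p - c) * (snd p - c) \<le> ?D p" for p unfolding Dist_def using Dnn[of p] by linarith
  define T where "T = \<bar>c\<bar> + R + 1"
  have Rnn: "0 \<le> R" unfolding R_def Dist_def using Dnn[of "(y1,t1)"] by auto
  have t1T: "t1 \<le> T"
  proof -
    have "\<bar>t1 - c\<bar> \<le> (t1 - c) * (t1 - c) + 1"
    proof -
      have h: "0 \<le> (\<bar>t1 - c\<bar> - 1/2) * (\<bar>t1 - c\<bar> - 1/2)" by simp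
      have "(\<bar>t1 - c\<bar> - 1/2) * (\<bar>t1 - c\<bar> - 1/2) = \<bar>t1 - c\<bar> * \<bar>t1 - c\<bar> - \<bar>t1 - c\<bar> + 1/4"
        by (simp add: algebra_simps)
      moreover have "\<bar>t1 - c\<bar> * \<bar>t1 - c\<bar> = (t1 - c) * (t1 - c)" by (rule abs_mult_self)
      ultimately show ?thesis using h by linarith
    qed
    moreover have "(t1 - c) * (t1 - c) \<le> R" unfolding R_def using Dge[of "(y1,t1)"] by simp
    ultimately show ?thesis unfolding T_def by linarith
  qed
  define K where "K = epi JJ J \<inter> (topspace (Rpow JJ) \<times> {..T})"
  have "compactin ?X K" unfolding K_def by (rule epi_trunc_compact[OF good])
  then have "compactin euclideanreal (?D ` K)" by (rule image_compactin[OF _ Dist_cont[OF fin]])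
  then have "compact (?D ` K)" by simp
  moreover have "(y1,t1) \<in> K" using e1 t1T y1 by (auto simp: K_def)
  ultimately obtain p where p: "p \<in> K" "\<And>q. q \<in> K \<Longrightarrow> ?D p \<le> ?D q"
    using compact_attains_inf[of "?D ` K"] by fastforce
  have pR: "?D p \<le> R" using p(2)[OF \<open>(y1,t1) \<in> K\<close>] unfolding R_def .
  show ?thesis
  proof (intro bexI ballI)
    show "p \<in> epi JJ J" using p(1) K_def by auto
    fix e assume e: "e \<in> epi JJ J"
    show "?D p \<le> ?D e"
    proof (cases "snd e \<le> T")
      case True
      then have "e \<in> K" using e unfolding K_def epi_def by (cases e) auto
      then show ?thesis using p(2) by auto
    next
      case False
      then have "R + 1 < snd e - c" unfolding T_def by linarith
      then have "(R + 1) * (R + 1) \<le> (snd e - c) * (snd e - c)"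
        using Rnn by (intro mult_mono) auto
      moreover have "R < (R + 1) * (R + 1)"
      proof -
        have "(R + 1) * (R + 1) = R * R + 2 * R + 1" by (simp add: algebra_simps)
        moreover have "0 \<le> R * R" by simp
        ultimately show ?thesis using Rnn by linarith
      qed
      ultimately show ?thesis using pR Dge[of e] by linarith
    qed
  qed
qed



lemma epi_var:
  assumes cv: "convex_on_Rpow JJ J"
    and p: "(yp, tp) \<in> epi JJ J"
    and min: "\<And>e. e \<in> epi JJ J \<Longrightarrow> Dist JJ x0 c (yp, tp) \<le> Dist JJ x0 c e"
    and e: "(y, t) \<in> epi JJ J"
  shows "0 \<le> (\<Sum>i\<in>JJ. (yp i - x0 i) * (y i - yp i)) + (tp - c) * (t - tp)"
proof (rule ccontr)
  define A where "A = (\<Sum>i\<in>JJ. (yp i - x0 i) * (y i - yp i)) + (tp - c) * (t - tp)"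
  define Q where "Q = (\<Sum>i\<in>JJ. (y i - yp i) * (y i - yp i)) + (t - tp) * (t - tp)"
  assume "\<not> 0 \<le> (\<Sum>i\<in>JJ. (yp i - x0 i) * (y i - yp i)) + (tp - c) * (t - tp)"
  then have A0: "A < 0" unfolding A_def by simp
  have Q0: "0 \<le> Q" unfolding Q_def by (intro add_nonneg_nonneg sum_nonneg) auto
  have yE: "y \<in> JJ \<rightarrow>\<^sub>E UNIV" "J y \<le> ereal t" and pE: "yp \<in> JJ \<rightarrow>\<^sub>E UNIV" "J yp \<le> ereal tp"
    using e p by (auto simp: epi_def)
  have step: "0 \<le> 2 * s * A + s * s * Q" if s: "0 < s" "s < 1" for s
  proof -
    define ys where "ys = (\<lambda>i\<in>JJ. s * y i + (1 - s) * yp i)"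
    have "J ys \<le> ereal s * J y + ereal (1 - s) * J yp"
      using cv yE pE s unfolding convex_on_Rpow_def ys_def by blast
    also have "\<dots> \<le> ereal s * ereal t + ereal (1 - s) * ereal tp"
      using s yE pE by (intro add_mono ereal_mult_left_mono) auto
    also have "\<dots> = ereal (s * t + (1 - s) * tp)" by simp
    finally have "(ys, s * t + (1 - s) * tp) \<in> epi JJ J" unfolding epi_def ys_def by auto
    then have le: "Dist JJ x0 c (yp, tp) \<le> Dist JJ x0 c (ys, s * t + (1 - s) * tp)" by (rule min)
    have "Dist JJ x0 c (ys, s * t + (1 - s) * tp) = Dist JJ x0 c (yp, tp) + 2 * s * A + s * s * Q"
    proof -
      have "(\<Sum>i\<in>JJ. (ys i - x0 i) * (ys i - x0 i)) =
            (\<Sum>i\<in>JJ. (yp i - x0 i) * (yp i - x0 i) + 2 * s * ((yp i - x0 i) * (y i - yp i)) + s * s * ((y i - yp i) * (y i - yp i)))"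
        unfolding ys_def by (intro sum.cong) (auto simp: algebra_simps)
      also have "\<dots> = (\<Sum>i\<in>JJ. (yp i - x0 i) * (yp i - x0 i)) + 2 * s * (\<Sum>i\<in>JJ. (yp i - x0 i) * (y i - yp i))
          + s * s * (\<Sum>i\<in>JJ. (y i - yp i) * (y i - yp i))"
        by (simp add: sum.distrib sum_distrib_left)
      finally show ?thesis unfolding Dist_def A_def Q_def by (simp add: algebra_simps)
    qed
    then show ?thesis using le by linarith
  qed
  define s where "s = min (1/2) (- A / (Q + 1))"
  have "0 < - A / (Q + 1)" using A0 Q0 by (intro divide_pos_pos) auto
  moreover have "s \<le> 1/2" unfolding s_def by (rule min.cobounded1)
  ultimately have s0: "0 < s" "s < 1" unfolding s_def by (auto simp: min_def)
  have "s * Q \<le> (- A / (Q + 1)) * Q" unfolding s_def using Q0 by (intro mult_right_mono) auto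
  also have "\<dots> < - A"
  proof -
    have "(- A / (Q + 1)) * Q = - A * (Q / (Q + 1))" by simp
    also have "\<dots> < - A * 1" using A0 Q0 by (intro mult_strict_left_mono) auto
    finally show ?thesis by simp
  qed
  finally have "2 * A + s * Q < 0" using A0 by linarith
  moreover have "0 \<le> 2 * A + s * Q"
  proof -
    have "0 \<le> s * (2 * A + s * Q)" using step[OF s0] by (simp add: algebra_simps)
    then show ?thesis using s0 by (simp add: zero_le_mult_iff)
  qed
  ultimately show False by linarith
qed



lemma affine_minorant:
  assumes fin: "finite JJ" and good: "good_rate_function (Rpow JJ) J"
    and cv: "convex_on_Rpow JJ J"
    and y1: "y1 \<in> topspace (Rpow JJ)" "J y1 < \<infinity>"
    and x0: "x0 \<in> topspace (Rpow JJ)" and c: "ereal c < J x0"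
  shows "\<exists>lam\<in>JJ \<rightarrow>\<^sub>E UNIV. \<exists>\<beta>. (\<forall>y\<in>topspace (Rpow JJ). ereal ((\<Sum>i\<in>JJ. lam i * y i) + \<beta>) \<le> J y)
            \<and> c < (\<Sum>i\<in>JJ. lam i * x0 i) + \<beta>"
proof -
  have nn: "\<And>x. x \<in> topspace (Rpow JJ) \<Longrightarrow> 0 \<le> J x" using good unfolding good_rate_function_def by auto
  obtain p where p: "p \<in> epi JJ J" "\<And>e. e \<in> epi JJ J \<Longrightarrow> Dist JJ x0 c p \<le> Dist JJ x0 c e"
    using epi_min[OF fin good y1, of x0 c] by auto
  obtain yp tp where ppair: "p = (yp, tp)" by (cases p)
  define wy where "wy i = yp i - x0 i" for i
  define wt where "wt = tp - c"
  define Sp where "Sp = (\<Sum>i\<in>JJ. wy i * yp i)"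
  define Sx where "Sx = (\<Sum>i\<in>JJ. wy i * x0 i)"
  have var: "0 \<le> (\<Sum>i\<in>JJ. wy i * y i) - Sp + wt * (t - tp)" if "(y, t) \<in> epi JJ J" for y t
  proof -
    have "0 \<le> (\<Sum>i\<in>JJ. (yp i - x0 i) * (y i - yp i)) + (tp - c) * (t - tp)"
      using epi_var[OF cv p(1)[unfolded ppair] p(2)[unfolded ppair] that] .
    also have "(\<Sum>i\<in>JJ. (yp i - x0 i) * (y i - yp i)) = (\<Sum>i\<in>JJ. wy i * y i) - Sp"
      unfolding Sp_def wy_def by (simp add: right_diff_distrib sum_subtractf)
    finally show ?thesis unfolding wt_def by simp
  qed
  have pE: "yp \<in> JJ \<rightarrow>\<^sub>E UNIV" "J yp \<le> ereal tp" using p(1) ppair by (auto simp: epi_def)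
  have "(yp, tp + 1) \<in> epi JJ J" using pE by (auto simp: epi_def intro: order_trans)
  from var[OF this] have wt0: "0 \<le> wt" unfolding Sp_def by simp
  have notin: "(x0, c) \<notin> epi JJ J" using c by (auto simp: epi_def)
  have Dz: "Sx - Sp + wt * (c - tp) < 0"
  proof -
    have "Sx - Sp = (\<Sum>i\<in>JJ. wy i * x0 i - wy i * yp i)" unfolding Sx_def Sp_def by (simp add: sum_subtractf)
    also have "\<dots> = (\<Sum>i\<in>JJ. - ((yp i - x0 i) * (yp i - x0 i)))"
      by (intro sum.cong) (auto simp: wy_def algebra_simps)
    also have "\<dots> = - (\<Sum>i\<in>JJ. (yp i - x0 i) * (yp i - x0 i))" by (simp add: sum_negf)
    finally have eq: "Sx - Sp + wt * (c - tp) = - Dist JJ x0 c p"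
      unfolding Dist_def ppair wt_def by (simp add: algebra_simps)
    have "Dist JJ x0 c p \<noteq> 0"
    proof
      assume D0: "Dist JJ x0 c p = 0"
      have s0: "0 \<le> (\<Sum>i\<in>JJ. (yp i - x0 i) * (yp i - x0 i))" by (intro sum_nonneg) auto
      have q0: "0 \<le> (tp - c) * (tp - c)" by auto
      have D0': "(\<Sum>i\<in>JJ. (yp i - x0 i) * (yp i - x0 i)) + (tp - c) * (tp - c) = 0"
        using D0 unfolding Dist_def ppair by simp
      have "(\<Sum>i\<in>JJ. (yp i - x0 i) * (yp i - x0 i)) = 0" "(tp - c) * (tp - c) = 0"
        using D0' s0 q0 by linarith+
      then have "\<forall>i\<in>JJ. (yp i - x0 i) * (yp i - x0 i) = 0" "tp = c"
        using fin by (subst (asm) sum_nonneg_eq_0_iff; auto)+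
      then have "yp = x0" "tp = c" using pE(1) x0 by (auto simp: PiE_def extensional_def fun_eq_iff)
      then show False using notin p(1) ppair by auto
    qed
    moreover have "0 \<le> Dist JJ x0 c p" unfolding Dist_def
      by (intro add_nonneg_nonneg sum_nonneg) auto
    ultimately show ?thesis using eq by linarith
  qed
  have domcase: "\<And>y. y \<in> topspace (Rpow JJ) \<Longrightarrow> J y \<noteq> \<infinity> \<Longrightarrow>
      0 \<le> (\<Sum>i\<in>JJ. wy i * y i) - Sp + wt * (real_of_ereal (J y) - tp) \<and> J y = ereal (real_of_ereal (J y))"
  proof -
    fix y assume y: "y \<in> topspace (Rpow JJ)" "J y \<noteq> \<infinity>"
    then have Je: "J y = ereal (real_of_ereal (J y))" using nn[OF y(1)] by (cases "J y") auto
    then have "(y, real_of_ereal (J y)) \<in> epi JJ J" using y by (auto simp: epi_def)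
    from var[OF this] Je show "0 \<le> (\<Sum>i\<in>JJ. wy i * y i) - Sp + wt * (real_of_ereal (J y) - tp) \<and> J y = ereal (real_of_ereal (J y))" by auto
  qed
  have rs: "(\<Sum>i\<in>JJ. (\<lambda>i\<in>JJ. g i) i * y i) = (\<Sum>i\<in>JJ. g i * y i)" for g :: "_ \<Rightarrow> real" and y
    by (intro sum.cong) auto
  show ?thesis
  proof (cases "wt = 0")
    case False
    then have wtp: "0 < wt" using wt0 by auto
    define lam where "lam = (\<lambda>i\<in>JJ. - wy i / wt)"
    define \<beta> where "\<beta> = tp + Sp / wt"
    have Fl: "(\<Sum>i\<in>JJ. lam i * y i) = - (\<Sum>i\<in>JJ. wy i * y i) / wt" for y
      unfolding lam_def rs sum_negf[symmetric] sum_divide_distrib by (intro sum.cong) auto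
    show ?thesis
    proof (intro bexI[of _ lam] exI[of _ \<beta>] conjI ballI)
      show "lam \<in> JJ \<rightarrow>\<^sub>E UNIV" unfolding lam_def by auto
      fix y assume y: "y \<in> topspace (Rpow JJ)"
      show "ereal ((\<Sum>i\<in>JJ. lam i * y i) + \<beta>) \<le> J y"
      proof (cases "J y = \<infinity>")
        case False
        from domcase[OF y False] obtain t where t: "J y = ereal t" "0 \<le> (\<Sum>i\<in>JJ. wy i * y i) - Sp + wt * (t - tp)" by auto
        have "Sp - (\<Sum>i\<in>JJ. wy i * y i) \<le> (t - tp) * wt" using t(2) by (simp add: algebra_simps)
        then have h: "(Sp - (\<Sum>i\<in>JJ. wy i * y i)) / wt \<le> t - tp" using wtp by (simp add: pos_divide_le_eq)
        have "- (\<Sum>i\<in>JJ. wy i * y i) / wt + (tp + Sp / wt) = tp + (Sp - (\<Sum>i\<in>JJ. wy i * y i)) / wt"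
          by (simp add: diff_divide_distrib)
        then have "- (\<Sum>i\<in>JJ. wy i * y i) / wt + (tp + Sp / wt) \<le> t" using h by linarith
        then show ?thesis unfolding Fl \<beta>_def t(1) by simp
      qed simp
    next
      have "Sx - Sp < (tp - c) * wt" using Dz by (simp add: algebra_simps)
      then have h: "(Sx - Sp) / wt < tp - c" using wtp by (simp add: pos_divide_less_eq)
      have "- Sx / wt + (tp + Sp / wt) = tp - (Sx - Sp) / wt" by (simp add: diff_divide_distrib)
      then show "c < (\<Sum>i\<in>JJ. lam i * x0 i) + \<beta>"
        unfolding Fl \<beta>_def Sx_def[symmetric] using h by linarith
    qed
  next
    case True
    define \<mu> where "\<mu> = Sp - Sx"
    have mu: "0 < \<mu>" using Dz True unfolding \<mu>_def by simp
    define k where "k = (\<bar>c\<bar> + 1) / \<mu>"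
    have k: "0 < k" unfolding k_def using mu by auto
    define lam where "lam = (\<lambda>i\<in>JJ. - k * wy i)"
    have Fl: "(\<Sum>i\<in>JJ. lam i * y i) = - k * (\<Sum>i\<in>JJ. wy i * y i)" for y
      unfolding lam_def rs by (simp add: sum_distrib_left mult.assoc)
    show ?thesis
    proof (intro bexI[of _ lam] exI[of _ "k * Sp"] conjI ballI)
      show "lam \<in> JJ \<rightarrow>\<^sub>E UNIV" unfolding lam_def by auto
      fix y assume y: "y \<in> topspace (Rpow JJ)"
      show "ereal ((\<Sum>i\<in>JJ. lam i * y i) + k * Sp) \<le> J y"
      proof (cases "J y = \<infinity>")
        case False
        from domcase[OF y False] True have h: "0 \<le> (\<Sum>i\<in>JJ. wy i * y i) - Sp" by simp
        have "- k * (\<Sum>i\<in>JJ. wy i * y i) + k * Sp \<le> 0"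
          using mult_left_mono[OF h, of k] k by (simp add: algebra_simps)
        then have "ereal ((\<Sum>i\<in>JJ. lam i * y i) + k * Sp) \<le> 0" unfolding Fl by simp
        then show ?thesis using nn[OF y] by (rule order_trans)
      qed simp
    next
      have "(\<Sum>i\<in>JJ. lam i * x0 i) + k * Sp = k * \<mu>"
        unfolding Fl \<mu>_def Sx_def by (simp add: algebra_simps)
      also have "\<dots> = \<bar>c\<bar> + 1" unfolding k_def using mu by simp
      finally show "c < (\<Sum>i\<in>JJ. lam i * x0 i) + k * Sp" by linarith
    qed
  qed
qed



lemma scgf_le_imp:
  assumes "ereal (1 / a) * elog_enn X \<le> ereal B" "0 < a"
  shows "X \<le> ennreal (exp (a * B))"
proof (cases "X = \<infinity>")
  case True
  then show ?thesis using assms by (simp add: elog_enn_def)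
next
  case False
  show ?thesis
  proof (cases "enn2real X = 0")
    case True
    then have "X = 0" using False by (simp add: enn2real_eq_0_iff)
    then show ?thesis by simp
  next
    case nz: False
    have "ereal (1 / a) * elog_enn X = ereal (ln (enn2real X) / a)"
      using False nz by (simp add: elog_enn_def elog_def)
    then have "ln (enn2real X) / a \<le> B" using assms by simp
    then have "ln (enn2real X) \<le> a * B" using assms(2) by (simp add: divide_le_eq mult.commute)
    moreover have "0 < enn2real X" using nz by (simp add: enn2real_nonneg less_le)
    ultimately have "enn2real X \<le> exp (a * B)" by (metis exp_le_cancel_iff exp_ln)
    then have "ennreal (enn2real X) \<le> ennreal (exp (a * B))" by (rule ennreal_leI)
    then show ?thesis using False by (simp add: ennreal_enn2real_if)
  qed
qed

lemma le_imp_scgf: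
  assumes "X \<le> ennreal v" "0 < v" "0 < a"
  shows "ereal (1 / a) * elog_enn X \<le> ereal (ln v / a)"
proof (cases "X = 0")
  case True
  then show ?thesis using assms by (simp add: elog_enn_def elog_def)
next
  case False
  have Xf: "X \<noteq> \<infinity>" using assms(1) by (auto simp: top_unique)
  then have pos: "0 < enn2real X" using False by (simp add: enn2real_eq_0_iff less_le)
  have "enn2real X \<le> enn2real (ennreal v)" using enn2real_mono[OF assms(1)] by simp
  then have "enn2real X \<le> v" using assms(2) by simp
  then have "ln (enn2real X) \<le> ln v" using pos by simp
  then have "ln (enn2real X) / a \<le> ln v / a" using assms(3) by (simp add: divide_right_mono)
  then show ?thesis using Xf pos by (simp add: elog_enn_def elog_def)
qed

lemma ge_imp_scgf:
  assumes "ennreal v \<le> X" "0 < v" "0 < a"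
  shows "ereal (ln v / a) \<le> ereal (1 / a) * elog_enn X"
proof (cases "X = \<infinity>")
  case True
  then show ?thesis using assms by (simp add: elog_enn_def)
next
  case False
  have "enn2real (ennreal v) \<le> enn2real X" using enn2real_mono[OF assms(1)] False by (simp add: less_top)
  then have "v \<le> enn2real X" using assms(2) by simp
  then have pos: "0 < enn2real X" using assms by linarith
  have "ln v \<le> ln (enn2real X)" using \<open>v \<le> enn2real X\<close> assms by simp
  then have "ln v / a \<le> ln (enn2real X) / a" using assms(3) by (simp add: divide_right_mono)
  then show ?thesis using False pos by (simp add: elog_enn_def elog_def)
qed

lemma prob_lt_imp:
  assumes "ereal (1 / a) * elog p < ereal c" "0 \<le> p" "0 < a"
  shows "p \<le> exp (a * c)"
proof (cases "p = 0")
  case False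
  then have "ln p / a < c" using assms by (simp add: elog_def)
  then have "ln p < a * c" using assms by (simp add: divide_less_eq mult.commute)
  then show ?thesis using False assms(2) by (metis exp_le_cancel_iff exp_ln less_eq_real_def order.strict_iff_not)
qed simp

lemma prob_gt_imp:
  assumes "ereal c < ereal (1 / a) * elog p" "0 \<le> p" "0 < a"
  shows "exp (a * c) < p"
proof (cases "p = 0")
  case True
  then show ?thesis using assms by (simp add: elog_def)
next
  case False
  then have "c < ln p / a" using assms by (simp add: elog_def)
  then have "a * c < ln p" using assms by (simp add: less_divide_eq mult.commute)
  then show ?thesis using False assms(2) by (metis exp_less_cancel_iff exp_ln less_eq_real_def)
qed



definition lin :: "'i set \<Rightarrow> ('i \<Rightarrow> real) \<Rightarrow> ('i \<Rightarrow> real) \<Rightarrow> real" where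
  "lin JJ lam y = (\<Sum>i\<in>JJ. lam i * y i)"

lemma lin_cont: "finite JJ \<Longrightarrow> continuous_map (Rpow JJ) euclideanreal (lin JJ lam)"
  unfolding lin_def
  by (intro continuous_map_sum continuous_map_real_mult continuous_map_product_projection
      continuous_map_const[THEN iffD2]) auto

lemma lin_meas:
  assumes fin: "finite JJ" and L: "LDP (Rpow JJ) a M Z J"
  shows "(\<lambda>\<omega>. lin JJ lam (Z n \<omega>)) \<in> borel_measurable (M n)"
proof (rule borel_measurableI)
  fix S :: "real set" assume S: "open S"
  have top: "\<And>\<omega>. \<omega> \<in> space (M n) \<Longrightarrow> Z n \<omega> \<in> topspace (Rpow JJ)" using L unfolding LDP_def by blast
  have op: "openin (Rpow JJ) {y\<in>topspace (Rpow JJ). lin JJ lam y \<in> S}"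
    using openin_continuous_map_preimage[OF lin_cont[OF fin] open_openin[THEN iffD1, OF S]] by simp
  have "(\<lambda>\<omega>. lin JJ lam (Z n \<omega>)) -` S \<inter> space (M n) = {\<omega>\<in>space (M n). Z n \<omega> \<in> {y\<in>topspace (Rpow JJ). lin JJ lam y \<in> S}}"
    using top by auto
  also have "\<dots> \<in> sets (M n)" using L op unfolding LDP_def by blast
  finally show "(\<lambda>\<omega>. lin JJ lam (Z n \<omega>)) -` S \<inter> space (M n) \<in> sets (M n)" .
qed

lemma scgf_lin: "scgf a M Z JJ n lam = ereal (1 / a n) * elog_enn (\<integral>\<^sup>+ \<omega>. ennreal (exp (a n * lin JJ lam (Z n \<omega>))) \<partial>M n)"
  unfolding scgf_def lin_def ..

lemma varadhan_lower:
  assumes fin: "finite JJ" and L: "LDP (Rpow JJ) a M Z J" and apos: "\<And>n. 0 < a n"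
    and prob: "\<And>n. prob_space (M n)"
    and y0: "y0 \<in> topspace (Rpow JJ)" "J y0 = ereal r0" and d: "0 < \<delta>"
  shows "eventually (\<lambda>n. ereal (lin JJ lam y0 - r0 - 2 * \<delta>) \<le> scgf a M Z JJ n lam) sequentially"
proof -
  define G where "G = {y\<in>topspace (Rpow JJ). lin JJ lam y \<in> {lin JJ lam y0 - \<delta> <..}}"
  have opG: "openin (Rpow JJ) G" unfolding G_def
    by (rule openin_continuous_map_preimage[OF lin_cont[OF fin]]) simp
  have y0G: "y0 \<in> G" using y0 d unfolding G_def by auto
  have low: "- (INF x\<in>G. J x) \<le> liminf (\<lambda>n. ereal (1 / a n) * elog (measure (M n) {\<omega>\<in>space (M n). Z n \<omega> \<in> G}))"
    using L opG unfolding LDP_def by blast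
  have "(INF x\<in>G. J x) \<le> ereal r0" using INF_lower[OF y0G, of J] y0 by simp
  then have "- ereal r0 \<le> - (INF x\<in>G. J x)" by (rule iffD2[OF ereal_minus_le_minus])
  then have "ereal (- r0) \<le> - (INF x\<in>G. J x)" by simp
  then have m: "ereal (- r0) \<le> liminf (\<lambda>n. ereal (1 / a n) * elog (measure (M n) {\<omega>\<in>space (M n). Z n \<omega> \<in> G}))"
    using low by (rule order_trans)
  have "ereal (- r0 - \<delta>) < ereal (- r0)" using d by simp
  then have "ereal (- r0 - \<delta>) < liminf (\<lambda>n. ereal (1 / a n) * elog (measure (M n) {\<omega>\<in>space (M n). Z n \<omega> \<in> G}))"
    using m by (rule less_le_trans)
  then have ev: "eventually (\<lambda>n. ereal (- r0 - \<delta>) < ereal (1 / a n) * elog (measure (M n) {\<omega>\<in>space (M n). Z n \<omega> \<in> G})) sequentially"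
    by (rule less_LiminfD)
  show ?thesis
  proof (rule eventually_mono[OF ev])
    fix n
    define E where "E = {\<omega>\<in>space (M n). Z n \<omega> \<in> G}"
    assume "ereal (- r0 - \<delta>) < ereal (1 / a n) * elog (measure (M n) {\<omega>\<in>space (M n). Z n \<omega> \<in> G})"
    then have P: "exp (a n * (- r0 - \<delta>)) < measure (M n) E"
      unfolding E_def by (rule prob_gt_imp) (auto simp: apos)
    have Es: "E \<in> sets (M n)" using L opG unfolding LDP_def E_def by blast
    interpret prob_space "M n" by (rule prob)
    define e where "e = exp (a n * (lin JJ lam y0 - \<delta>))"
    have "ennreal e * emeasure (M n) E = (\<integral>\<^sup>+ \<omega>. ennreal e * indicator E \<omega> \<partial>M n)"
      using Es by (simp add: nn_integral_cmult_indicator)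
    also have "\<dots> \<le> (\<integral>\<^sup>+ \<omega>. ennreal (exp (a n * lin JJ lam (Z n \<omega>))) \<partial>M n)"
    proof (rule nn_integral_mono)
      fix \<omega> assume "\<omega> \<in> space (M n)"
      show "ennreal e * indicator E \<omega> \<le> ennreal (exp (a n * lin JJ lam (Z n \<omega>)))"
      proof (cases "\<omega> \<in> E")
        case True
        then have "lin JJ lam y0 - \<delta> < lin JJ lam (Z n \<omega>)" unfolding E_def G_def by auto
        then have "e \<le> exp (a n * lin JJ lam (Z n \<omega>))" unfolding e_def using apos[of n]
          by (simp add: less_imp_le)
        then show ?thesis using True by (simp add: ennreal_leI)
      qed simp
    qed
    finally have I1: "ennreal e * emeasure (M n) E \<le> (\<integral>\<^sup>+ \<omega>. ennreal (exp (a n * lin JJ lam (Z n \<omega>))) \<partial>M n)" .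
    define v where "v = e * exp (a n * (- r0 - \<delta>))"
    have vpos: "0 < v" unfolding v_def e_def by simp
    have "ennreal v \<le> ennreal e * emeasure (M n) E"
    proof -
      have "v \<le> e * measure (M n) E" unfolding v_def using P by (simp add: e_def less_imp_le)
      then have "ennreal v \<le> ennreal (e * measure (M n) E)" by (rule ennreal_leI)
      also have "\<dots> = ennreal e * emeasure (M n) E"
        by (simp add: emeasure_eq_measure ennreal_mult e_def)
      finally show ?thesis .
    qed
    from this I1 have "ennreal v \<le> (\<integral>\<^sup>+ \<omega>. ennreal (exp (a n * lin JJ lam (Z n \<omega>))) \<partial>M n)" by (rule order_trans)
    from ge_imp_scgf[OF this vpos apos[of n]]
    have "ereal (ln v / a n) \<le> scgf a M Z JJ n lam" unfolding scgf_lin .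
    moreover have "ln v / a n = lin JJ lam y0 - r0 - 2 * \<delta>"
      using apos[of n] unfolding v_def e_def by (simp add: ln_mult field_simps)
    ultimately show "ereal (lin JJ lam y0 - r0 - 2 * \<delta>) \<le> scgf a M Z JJ n lam" by simp
  qed
qed



lemma lin_scale: "lin JJ (\<lambda>i\<in>JJ. 2 * lam i) y = 2 * lin JJ lam y"
  unfolding lin_def by (simp add: sum_distrib_left mult.assoc)

lemma varadhan_upper:
  assumes fin: "finite JJ" and L: "LDP (Rpow JJ) a M Z J" and apos: "\<And>n. 0 < a n"
    and alim: "filterlim a at_top sequentially"
    and prob: "\<And>n. prob_space (M n)"
    and sb: "\<And>y. y \<in> topspace (Rpow JJ) \<Longrightarrow> ereal (lin JJ lam y) - J y \<le> ereal s"
    and Bb: "\<And>n. scgf a M Z JJ n (\<lambda>i\<in>JJ. 2 * lam i) \<le> ereal B"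
    and d: "0 < \<delta>"
  shows "eventually (\<lambda>n. scgf a M Z JJ n lam \<le> ereal (s + 3 * \<delta>)) sequentially"
proof -
  define lam2 where "lam2 = (\<lambda>i\<in>JJ. 2 * lam i)"
  define N where "N = \<bar>s\<bar> + 1"
  define Mx where "Mx = \<bar>B\<bar> + \<bar>s\<bar> + 1"
  define K where "K = nat \<lceil>(Mx + N) / \<delta>\<rceil>"
  define m where "m k = - N + real k * \<delta>" for k :: nat
  define C where "C k = {y\<in>topspace (Rpow JJ). lin JJ lam y \<in> {m k .. m k + \<delta>}}" for k
  define E where "E n k = {\<omega>\<in>space (M n). Z n \<omega> \<in> C k}" for n k
  have top: "\<And>n \<omega>. \<omega> \<in> space (M n) \<Longrightarrow> Z n \<omega> \<in> topspace (Rpow JJ)" using L unfolding LDP_def by blast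
  have Ccl: "closedin (Rpow JJ) (C k)" for k unfolding C_def
    by (rule closedin_continuous_map_preimage[OF lin_cont[OF fin]]) simp
  have Es: "E n k \<in> sets (M n)" for n k
  proof -
    have "openin (Rpow JJ) (topspace (Rpow JJ) - C k)" by (rule openin_diff[OF openin_topspace Ccl])
    then have "{\<omega>\<in>space (M n). Z n \<omega> \<in> topspace (Rpow JJ) - C k} \<in> sets (M n)"
      using L unfolding LDP_def by blast
    then have "space (M n) - {\<omega>\<in>space (M n). Z n \<omega> \<in> topspace (Rpow JJ) - C k} \<in> sets (M n)" by auto
    also have "space (M n) - {\<omega>\<in>space (M n). Z n \<omega> \<in> topspace (Rpow JJ) - C k} = E n k"
      unfolding E_def using top Ccl[of k, THEN closedin_subset] by auto
    finally show ?thesis .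
  qed
  have Jge: "ereal (lin JJ lam y - s) \<le> J y" if "y \<in> topspace (Rpow JJ)" for y
    using sb[OF that] by (cases "J y") auto
  have Pk: "eventually (\<lambda>n. measure (M n) (E n k) \<le> exp (a n * (s - m k + \<delta>))) sequentially" for k
  proof -
    have "ereal (m k - s) \<le> (INF y\<in>C k. J y)"
    proof (rule INF_greatest)
      fix y assume "y \<in> C k"
      then have "y \<in> topspace (Rpow JJ)" "m k \<le> lin JJ lam y" unfolding C_def by auto
      then have "ereal (m k - s) \<le> ereal (lin JJ lam y - s)" by simp
      then show "ereal (m k - s) \<le> J y" using Jge[OF \<open>y \<in> topspace (Rpow JJ)\<close>] by (rule order_trans)
    qed
    then have "- (INF y\<in>C k. J y) \<le> - ereal (m k - s)" by (rule iffD2[OF ereal_minus_le_minus])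
    then have "- (INF y\<in>C k. J y) \<le> ereal (s - m k)" by simp
    moreover have "limsup (\<lambda>n. ereal (1 / a n) * elog (measure (M n) (E n k))) \<le> - (INF y\<in>C k. J y)"
      using L Ccl[of k] unfolding LDP_def E_def by blast
    ultimately have "limsup (\<lambda>n. ereal (1 / a n) * elog (measure (M n) (E n k))) < ereal (s - m k + \<delta>)"
    proof -
      assume h1: "- (INF y\<in>C k. J y) \<le> ereal (s - m k)"
        and h2: "limsup (\<lambda>n. ereal (1 / a n) * elog (measure (M n) (E n k))) \<le> - (INF y\<in>C k. J y)"
      have "ereal (s - m k) < ereal (s - m k + \<delta>)" using d by simp
      then show ?thesis using order_trans[OF h2 h1] by (rule le_less_trans[rotated])
    qed
    then have "eventually (\<lambda>n. ereal (1 / a n) * elog (measure (M n) (E n k)) < ereal (s - m k + \<delta>)) sequentially"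
      by (rule Limsup_lessD)
    then show ?thesis
    proof (rule eventually_mono)
      fix n assume "ereal (1 / a n) * elog (measure (M n) (E n k)) < ereal (s - m k + \<delta>)"
      then show "measure (M n) (E n k) \<le> exp (a n * (s - m k + \<delta>))"
        by (rule prob_lt_imp) (auto simp: apos)
    qed
  qed
  have ev1: "eventually (\<lambda>n. \<forall>k\<in>{..K}. measure (M n) (E n k) \<le> exp (a n * (s - m k + \<delta>))) sequentially"
    by (intro eventually_ball_finite) (auto intro: Pk)
  have ev2: "eventually (\<lambda>n. ln (real K + 3) / \<delta> \<le> a n) sequentially"
    using alim by (simp add: filterlim_at_top)
  show ?thesis
  proof (rule eventually_mono[OF eventually_conj[OF ev1 ev2]])
    fix n assume asm: "(\<forall>k\<in>{..K}. measure (M n) (E n k) \<le> exp (a n * (s - m k + \<delta>))) \<and> ln (real K + 3) / \<delta> \<le> a n"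
    interpret prob_space "M n" by (rule prob)
    have an: "0 < a n" by (rule apos)
    define W where "W = exp (a n * (s + 2 * \<delta>))"
    define f0 where "f0 = (\<lambda>\<omega>::'b. ennreal (exp (- a n * N)))"
    define f1 where "f1 = (\<lambda>\<omega>. \<Sum>k\<le>K. ennreal (exp (a n * (m k + \<delta>))) * indicator (E n k) \<omega>)"
    define f2 where "f2 = (\<lambda>\<omega>. ennreal (exp (- a n * Mx)) * ennreal (exp (a n * lin JJ lam2 (Z n \<omega>))))"
    have lm2[measurable]: "(\<lambda>\<omega>. lin JJ lam2 (Z n \<omega>)) \<in> borel_measurable (M n)" by (rule lin_meas[OF fin L])
    have Es'[measurable]: "E n k \<in> sets (M n)" for k by (rule Es)
    have meas2: "(\<lambda>\<omega>. ennreal (exp (a n * lin JJ lam2 (Z n \<omega>)))) \<in> borel_measurable (M n)"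
      by measurable
    have m0[measurable]: "f0 \<in> borel_measurable (M n)" unfolding f0_def by measurable
    have m1[measurable]: "f1 \<in> borel_measurable (M n)" unfolding f1_def by measurable
    have m2[measurable]: "f2 \<in> borel_measurable (M n)" unfolding f2_def by measurable
    have pw: "ennreal (exp (a n * lin JJ lam (Z n \<omega>))) \<le> f0 \<omega> + f1 \<omega> + f2 \<omega>" if \<omega>: "\<omega> \<in> space (M n)" for \<omega>
    proof -
      define u where "u = lin JJ lam (Z n \<omega>)"
      have f1nn: "0 \<le> f1 \<omega>" "0 \<le> f2 \<omega>" "0 \<le> f0 \<omega>" by auto
      consider "u < - N" | "Mx \<le> u" | "- N \<le> u" "u < Mx" by linarith
      then show ?thesis
      proof cases
        case 1
        then have "a n * u \<le> a n * (- N)" using an by (intro mult_left_mono) auto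
        then have "exp (a n * u) \<le> exp (- a n * N)" by simp
        then have X: "ennreal (exp (a n * u)) \<le> f0 \<omega>" unfolding f0_def by (rule ennreal_leI)
        show ?thesis unfolding u_def[symmetric] by (rule add_increasing2[OF f1nn(2) add_increasing2[OF f1nn(1) X]])
      next
        case 2
        have h: "a n * Mx \<le> a n * u" using 2 an by (intro mult_left_mono) auto
        have e1: "a n * (2 * u) = 2 * (a n * u)" by simp
        have "a n * u \<le> - a n * Mx + a n * (2 * u)" using h e1 by linarith
        then have "exp (a n * u) \<le> exp (- a n * Mx + a n * (2 * u))" by simp
        also have "\<dots> = exp (- a n * Mx) * exp (a n * lin JJ lam2 (Z n \<omega>))"
          unfolding lam2_def lin_scale u_def[symmetric] by (rule exp_add)
        finally have "ennreal (exp (a n * u)) \<le> ennreal (exp (- a n * Mx) * exp (a n * lin JJ lam2 (Z n \<omega>)))"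
          by (rule ennreal_leI)
        then have X: "ennreal (exp (a n * u)) \<le> f2 \<omega>" unfolding f2_def by (simp add: ennreal_mult)
        have "0 \<le> f0 \<omega> + f1 \<omega>" by simp
        then show ?thesis unfolding u_def[symmetric] by (rule add_increasing[OF _ X])
      next
        case 3
        define k where "k = nat \<lfloor>(u + N) / \<delta>\<rfloor>"
        have q0: "0 \<le> (u + N) / \<delta>" using 3 d by (intro divide_nonneg_pos) auto
        then have kr: "real k = of_int \<lfloor>(u + N) / \<delta>\<rfloor>" unfolding k_def by simp
        have "real k \<le> (u + N) / \<delta>" unfolding kr by (rule of_int_floor_le)
        then have lo: "m k \<le> u" unfolding m_def using d by (simp add: le_divide_eq algebra_simps)
        have "(u + N) / \<delta> < real k + 1" unfolding kr by (rule real_of_int_floor_add_one_gt)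
        then have hi: "u \<le> m k + \<delta>" unfolding m_def using d by (simp add: divide_less_eq algebra_simps)
        have "\<lfloor>(u + N) / \<delta>\<rfloor> \<le> \<lceil>(Mx + N) / \<delta>\<rceil>"
        proof -
          have "(u + N) / \<delta> \<le> (Mx + N) / \<delta>" using 3 d by (intro divide_right_mono) auto
          then show ?thesis by (rule order_trans[OF floor_mono floor_le_ceiling])
        qed
        then have kK: "k \<in> {..K}" unfolding k_def K_def by (simp add: nat_mono)
        have "\<omega> \<in> E n k" unfolding E_def C_def using \<omega> top lo hi u_def by auto
        have "a n * u \<le> a n * (m k + \<delta>)" using hi an by (intro mult_left_mono) auto
        then have "exp (a n * u) \<le> exp (a n * (m k + \<delta>))" by simp
        then have "ennreal (exp (a n * u)) \<le> ennreal (exp (a n * (m k + \<delta>))) * indicator (E n k) \<omega>"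
          using \<open>\<omega> \<in> E n k\<close> by (simp add: ennreal_leI)
        also have "\<dots> \<le> f1 \<omega>" unfolding f1_def by (rule member_le_sum[OF kK]) auto
        finally have X: "ennreal (exp (a n * u)) \<le> f1 \<omega>" .
        show ?thesis unfolding u_def[symmetric] by (rule add_increasing2[OF f1nn(2) add_increasing[OF f1nn(3) X]])
      qed
    qed
    have "(\<integral>\<^sup>+ \<omega>. ennreal (exp (a n * lin JJ lam (Z n \<omega>))) \<partial>M n) \<le> (\<integral>\<^sup>+ \<omega>. f0 \<omega> + f1 \<omega> + f2 \<omega> \<partial>M n)"
      by (rule nn_integral_mono) (rule pw)
    also have "(\<integral>\<^sup>+ \<omega>. f0 \<omega> + f1 \<omega> + f2 \<omega> \<partial>M n) = (\<integral>\<^sup>+ \<omega>. f0 \<omega> + f1 \<omega> \<partial>M n) + integral\<^sup>N (M n) f2"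
      by (rule nn_integral_add) measurable
    also have "(\<integral>\<^sup>+ \<omega>. f0 \<omega> + f1 \<omega> \<partial>M n) = integral\<^sup>N (M n) f0 + integral\<^sup>N (M n) f1"
      by (rule nn_integral_add) measurable
    finally have I0: "(\<integral>\<^sup>+ \<omega>. ennreal (exp (a n * lin JJ lam (Z n \<omega>))) \<partial>M n) \<le> integral\<^sup>N (M n) f0 + integral\<^sup>N (M n) f1 + integral\<^sup>N (M n) f2" .
    have e0: "integral\<^sup>N (M n) f0 = ennreal (exp (- a n * N))" unfolding f0_def by (simp add: emeasure_space_1)
    have "integral\<^sup>N (M n) f1 = (\<Sum>k\<le>K. \<integral>\<^sup>+ \<omega>. ennreal (exp (a n * (m k + \<delta>))) * indicator (E n k) \<omega> \<partial>M n)"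
      unfolding f1_def by (rule nn_integral_sum) measurable
    also have "\<dots> = (\<Sum>k\<le>K. ennreal (exp (a n * (m k + \<delta>))) * emeasure (M n) (E n k))"
      by (intro sum.cong refl nn_integral_cmult_indicator Es)
    finally have e1: "integral\<^sup>N (M n) f1 = (\<Sum>k\<le>K. ennreal (exp (a n * (m k + \<delta>))) * emeasure (M n) (E n k))" .
    have e2: "integral\<^sup>N (M n) f2 = ennreal (exp (- a n * Mx)) * (\<integral>\<^sup>+ \<omega>. ennreal (exp (a n * lin JJ lam2 (Z n \<omega>))) \<partial>M n)"
      unfolding f2_def using meas2 by (rule nn_integral_cmult)
    have I1: "(\<integral>\<^sup>+ \<omega>. ennreal (exp (a n * lin JJ lam (Z n \<omega>))) \<partial>M n) \<le>
       ennreal (exp (- a n * N)) + (\<Sum>k\<le>K. ennreal (exp (a n * (m k + \<delta>))) * emeasure (M n) (E n k)) +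
       ennreal (exp (- a n * Mx)) * (\<integral>\<^sup>+ \<omega>. ennreal (exp (a n * lin JJ lam2 (Z n \<omega>))) \<partial>M n)"
      using I0 unfolding e0 e1 e2 .
    have b0: "ennreal (exp (- a n * N)) \<le> ennreal W"
    proof -
      have "- N \<le> s + 2 * \<delta>" unfolding N_def using d by linarith
      then have "a n * (- N) \<le> a n * (s + 2 * \<delta>)" using an by (intro mult_left_mono) auto
      then have h: "- a n * N \<le> a n * (s + 2 * \<delta>)" by simp
      show ?thesis unfolding W_def using h by simp
    qed
    have b1: "ennreal (exp (a n * (m k + \<delta>))) * emeasure (M n) (E n k) \<le> ennreal W" if k: "k \<in> {..K}" for k
    proof -
      have "ennreal (exp (a n * (m k + \<delta>))) * emeasure (M n) (E n k) = ennreal (exp (a n * (m k + \<delta>)) * measure (M n) (E n k))"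
        by (simp add: emeasure_eq_measure ennreal_mult)
      also have "\<dots> \<le> ennreal (exp (a n * (m k + \<delta>)) * exp (a n * (s - m k + \<delta>)))"
        using asm k by (intro ennreal_leI mult_left_mono) auto
      also have "exp (a n * (m k + \<delta>)) * exp (a n * (s - m k + \<delta>)) = exp (a n * (m k + \<delta>) + a n * (s - m k + \<delta>))"
        by (rule exp_add[symmetric])
      also have "\<dots> = W" unfolding W_def by (rule arg_cong[where f=exp]) (simp add: algebra_simps)
      finally show ?thesis .
    qed
    have b2: "ennreal (exp (- a n * Mx)) * (\<integral>\<^sup>+ \<omega>. ennreal (exp (a n * lin JJ lam2 (Z n \<omega>))) \<partial>M n) \<le> ennreal W"
    proof -
      have "(\<integral>\<^sup>+ \<omega>. ennreal (exp (a n * lin JJ lam2 (Z n \<omega>))) \<partial>M n) \<le> ennreal (exp (a n * B))"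
        using Bb[of n] unfolding scgf_lin lam2_def by (rule scgf_le_imp) (rule an)
      then have "ennreal (exp (- a n * Mx)) * (\<integral>\<^sup>+ \<omega>. ennreal (exp (a n * lin JJ lam2 (Z n \<omega>))) \<partial>M n)
          \<le> ennreal (exp (- a n * Mx)) * ennreal (exp (a n * B))" by (rule mult_left_mono) simp
      also have "\<dots> = ennreal (exp (- a n * Mx) * exp (a n * B))" by (simp add: ennreal_mult)
      also have "exp (- a n * Mx) * exp (a n * B) = exp (- a n * Mx + a n * B)" by (rule exp_add[symmetric])
      also have "\<dots> \<le> ennreal W"
      proof -
        have "B - Mx \<le> s + 2 * \<delta>" unfolding Mx_def using d by linarith
        then have "a n * (B - Mx) \<le> a n * (s + 2 * \<delta>)" using an by (intro mult_left_mono) auto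
        then have h: "- a n * Mx + a n * B \<le> a n * (s + 2 * \<delta>)" by (simp add: algebra_simps)
        show ?thesis unfolding W_def using h by simp
      qed
      finally show ?thesis .
    qed
    have "(\<Sum>k\<le>K. ennreal (exp (a n * (m k + \<delta>))) * emeasure (M n) (E n k)) \<le> (\<Sum>k\<le>K. ennreal W)"
      by (rule sum_mono) (rule b1)
    also have "\<dots> = ennreal (\<Sum>k\<le>K. W)" by (rule sum_ennreal) (simp add: W_def)
    also have "(\<Sum>k\<le>K. W) = (real K + 1) * W" by (simp add: algebra_simps)
    finally have b1': "(\<Sum>k\<le>K. ennreal (exp (a n * (m k + \<delta>))) * emeasure (M n) (E n k)) \<le> ennreal ((real K + 1) * W)" .
    have "(\<integral>\<^sup>+ \<omega>. ennreal (exp (a n * lin JJ lam (Z n \<omega>))) \<partial>M n) \<le> ennreal W + ennreal ((real K + 1) * W) + ennreal W"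
      using order_trans[OF I1 add_mono[OF add_mono[OF b0 b1'] b2]] .
    also have "\<dots> = ennreal ((real K + 3) * W)"
    proof -
      have Wp0: "0 \<le> W" unfolding W_def by simp
      have q1: "0 \<le> (real K + 1) * W" using Wp0 by simp
      have r1: "ennreal (W + (real K + 1) * W) = ennreal W + ennreal ((real K + 1) * W)" by (rule ennreal_plus[OF Wp0 q1])
      have r2: "ennreal (W + (real K + 1) * W + W) = ennreal (W + (real K + 1) * W) + ennreal W"
        by (rule ennreal_plus) (use Wp0 q1 in auto)
      have "ennreal W + ennreal ((real K + 1) * W) + ennreal W = ennreal (W + (real K + 1) * W + W)"
        unfolding r2 r1 ..
      also have "W + (real K + 1) * W + W = (real K + 3) * W" by (simp add: algebra_simps)
      finally show ?thesis .
    qed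
    finally have Ib: "(\<integral>\<^sup>+ \<omega>. ennreal (exp (a n * lin JJ lam (Z n \<omega>))) \<partial>M n) \<le> ennreal ((real K + 3) * W)" .
    have Wp: "0 < (real K + 3) * W" unfolding W_def by simp
    have "scgf a M Z JJ n lam \<le> ereal (ln ((real K + 3) * W) / a n)"
      unfolding scgf_lin by (rule le_imp_scgf[OF Ib Wp an])
    also have "ln ((real K + 3) * W) / a n = ln (real K + 3) / a n + (s + 2 * \<delta>)"
    proof -
      have "ln ((real K + 3) * W) = ln (real K + 3) + a n * (s + 2 * \<delta>)"
        unfolding W_def by (subst ln_mult) auto
      then show ?thesis using an by (simp add: add_divide_distrib)
    qed
    finally have S1: "scgf a M Z JJ n lam \<le> ereal (ln (real K + 3) / a n + (s + 2 * \<delta>))" .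
    have "ln (real K + 3) \<le> a n * \<delta>" using asm pos_divide_le_eq[OF d] by auto
    then have "ln (real K + 3) / a n \<le> \<delta>" using pos_divide_le_eq[OF an] by (simp add: mult.commute)
    then have "ereal (ln (real K + 3) / a n + (s + 2 * \<delta>)) \<le> ereal (s + 3 * \<delta>)" by simp
    with S1 show "scgf a M Z JJ n lam \<le> ereal (s + 3 * \<delta>)" by (rule order_trans)
  qed
qed



lemma rate_dom:
  assumes L: "LDP (Rpow JJ) a M Z J" and prob: "\<And>n. prob_space (M n)"
  shows "\<exists>y\<in>topspace (Rpow JJ). J y < 1"
proof -
  have top: "\<And>n \<omega>. \<omega> \<in> space (M n) \<Longrightarrow> Z n \<omega> \<in> topspace (Rpow JJ)" using L unfolding LDP_def by blast
  have "limsup (\<lambda>n. ereal (1 / a n) * elog (measure (M n) {\<omega>\<in>space (M n). Z n \<omega> \<in> topspace (Rpow JJ)}))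
      \<le> - (INF y\<in>topspace (Rpow JJ). J y)"
    using L closedin_topspace unfolding LDP_def by blast
  moreover have "measure (M n) {\<omega>\<in>space (M n). Z n \<omega> \<in> topspace (Rpow JJ)} = 1" for n
  proof -
    interpret prob_space "M n" by (rule prob)
    have "{\<omega>\<in>space (M n). Z n \<omega> \<in> topspace (Rpow JJ)} = space (M n)" using top by auto
    then show ?thesis by (simp add: prob_space)
  qed
  ultimately have "limsup (\<lambda>n. ereal 0) \<le> - (INF y\<in>topspace (Rpow JJ). J y)"
    by (simp add: elog_def)
  then have "ereal 0 \<le> - (INF y\<in>topspace (Rpow JJ). J y)" by (simp add: Limsup_const)
  then have "- (- (INF y\<in>topspace (Rpow JJ). J y)) \<le> - ereal 0" by (rule iffD2[OF ereal_minus_le_minus])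
  then have "(INF y\<in>topspace (Rpow JJ). J y) \<le> 0" by (simp add: zero_ereal_def)
  then have "(INF y\<in>topspace (Rpow JJ). J y) < 1" by (rule le_less_trans) simp
  then show ?thesis by (simp add: INF_less_iff)
qed

lemma bound_of_SUP:
  fixes f :: "nat \<Rightarrow> ereal"
  assumes "(SUP n. f n) < \<infinity>"
  shows "\<exists>B. \<forall>n. f n \<le> ereal B"
proof (cases "SUP n. f n")
  case (real r)
  then show ?thesis by (metis SUP_upper UNIV_I)
next
  case MInf
  show ?thesis
  proof (intro exI[of _ 0] allI)
    fix n
    have "f n \<le> (SUP n. f n)" by (rule SUP_upper) simp
    also have "\<dots> \<le> ereal 0" using MInf by simp
    finally show "f n \<le> ereal 0" .
  qed
qed (use assms in auto)

lemma varadhan: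
  assumes fin: "finite JJ" and LG: "LDP_good (Rpow JJ) a M Z J" and apos: "\<And>n. 0 < a n"
    and alim: "filterlim a at_top sequentially"
    and prob: "\<And>n. prob_space (M n)"
    and mom: "\<forall>lam\<in>JJ \<rightarrow>\<^sub>E UNIV. (SUP n. scgf a M Z JJ n lam) < \<infinity>"
  shows "\<exists>\<phi>. \<forall>lam\<in>JJ \<rightarrow>\<^sub>E UNIV. (\<lambda>n. scgf a M Z JJ n lam) \<longlonglongrightarrow> ereal (\<phi> lam) \<and>
      ereal (\<phi> lam) = (SUP y\<in>topspace (Rpow JJ). ereal (lin JJ lam y) - J y)"
proof -
  have L: "LDP (Rpow JJ) a M Z J" and good: "good_rate_function (Rpow JJ) J"
    using LG unfolding LDP_good_def by auto
  have nn: "\<And>x. x \<in> topspace (Rpow JJ) \<Longrightarrow> 0 \<le> J x" using good unfolding good_rate_function_def by auto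
  define Js where "Js lam = (SUP y\<in>topspace (Rpow JJ). ereal (lin JJ lam y) - J y)" for lam
  obtain y1 where y1: "y1 \<in> topspace (Rpow JJ)" "J y1 < 1" using rate_dom[OF L prob] by auto
  have fin_rep: "\<exists>r. J y = ereal r" if "y \<in> topspace (Rpow JJ)" "J y \<noteq> \<infinity>" for y
    using that nn[OF that(1)] by (cases "J y") auto
  have Js_fin: "\<exists>r. Js lam = ereal r" if lam: "lam \<in> JJ \<rightarrow>\<^sub>E UNIV" for lam
  proof -
    obtain B where B: "\<And>n. scgf a M Z JJ n lam \<le> ereal B" using bound_of_SUP mom lam by blast
    have "J y1 \<noteq> \<infinity>" using y1(2) by (cases "J y1") auto
    then obtain r1 where r1: "J y1 = ereal r1" using fin_rep[OF y1(1)] by auto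
    have "ereal (lin JJ lam y1) - J y1 \<le> Js lam" unfolding Js_def using y1(1) by (rule SUP_upper)
    then have lo: "Js lam \<noteq> -\<infinity>" using r1 by auto
    have hi: "Js lam \<noteq> \<infinity>"
    proof
      assume "Js lam = \<infinity>"
      then have "ereal (B + 3) < Js lam" by simp
      then obtain y where y: "y \<in> topspace (Rpow JJ)" "ereal (B + 3) < ereal (lin JJ lam y) - J y"
        unfolding Js_def by (auto simp: less_SUP_iff)
      then have "J y \<noteq> \<infinity>" by auto
      then obtain r0 where r0: "J y = ereal r0" using fin_rep[OF y(1)] by auto
      have gt: "B + 3 < lin JJ lam y - r0" using y(2) r0 by simp
      have "eventually (\<lambda>n. ereal (lin JJ lam y - r0 - 2 * 1) \<le> scgf a M Z JJ n lam) sequentially"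
        by (rule varadhan_lower[OF fin L apos prob y(1) r0]) simp
      then obtain n where "ereal (lin JJ lam y - r0 - 2 * 1) \<le> scgf a M Z JJ n lam"
        by (auto simp: eventually_sequentially)
      from order_trans[OF this B[of n]] have "lin JJ lam y - r0 - 2 * 1 \<le> B" by simp
      then show False using gt by simp
    qed
    show ?thesis using lo hi by (cases "Js lam") auto
  qed
  define \<phi> where "\<phi> lam = real_of_ereal (Js lam)" for lam
  have Jphi: "Js lam = ereal (\<phi> lam)" if "lam \<in> JJ \<rightarrow>\<^sub>E UNIV" for lam
    using Js_fin[OF that] unfolding \<phi>_def by auto
  show ?thesis
  proof (intro exI[of _ \<phi>] ballI conjI)
    fix lam :: "_ \<Rightarrow> real" assume lam: "lam \<in> JJ \<rightarrow>\<^sub>E UNIV"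
    show "ereal (\<phi> lam) = (SUP y\<in>topspace (Rpow JJ). ereal (lin JJ lam y) - J y)"
      using Jphi[OF lam] unfolding Js_def by simp
    define lam2 where "lam2 = (\<lambda>i\<in>JJ. 2 * lam i)"
    have lam2: "lam2 \<in> JJ \<rightarrow>\<^sub>E UNIV" unfolding lam2_def by auto
    obtain B where B: "\<And>n. scgf a M Z JJ n lam2 \<le> ereal B" using bound_of_SUP mom lam2 by blast
    have sb: "ereal (lin JJ lam y) - J y \<le> ereal (\<phi> lam)" if "y \<in> topspace (Rpow JJ)" for y
      unfolding Jphi[OF lam, symmetric] Js_def using that by (rule SUP_upper)
    show "(\<lambda>n. scgf a M Z JJ n lam) \<longlonglongrightarrow> ereal (\<phi> lam)"
    proof (rule order_tendstoI)
      fix a' assume "a' < ereal (\<phi> lam)"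
      then obtain z where z: "a' < ereal z" "z < \<phi> lam" using ereal_dense2 by force
      define \<delta> where "\<delta> = (\<phi> lam - z) / 3"
      have d: "0 < \<delta>" unfolding \<delta>_def using z by simp
      have "ereal (\<phi> lam - \<delta>) < Js lam" using Jphi[OF lam] d by simp
      then obtain y where y: "y \<in> topspace (Rpow JJ)" "ereal (\<phi> lam - \<delta>) < ereal (lin JJ lam y) - J y"
        unfolding Js_def by (auto simp: less_SUP_iff)
      then have "J y \<noteq> \<infinity>" by auto
      then obtain r0 where r0: "J y = ereal r0" using fin_rep[OF y(1)] by auto
      have gt: "\<phi> lam - \<delta> < lin JJ lam y - r0" using y(2) r0 by simp
      show "eventually (\<lambda>n. a' < scgf a M Z JJ n lam) sequentially"
      proof (rule eventually_mono[OF varadhan_lower[OF fin L apos prob y(1) r0 d]])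
        fix n assume h: "ereal (lin JJ lam y - r0 - 2 * \<delta>) \<le> scgf a M Z JJ n lam"
        have "\<phi> lam - z = 3 * \<delta>" unfolding \<delta>_def by simp
        then have "z < lin JJ lam y - r0 - 2 * \<delta>" using gt by linarith
        then have "ereal z < ereal (lin JJ lam y - r0 - 2 * \<delta>)" by simp
        then show "a' < scgf a M Z JJ n lam" using z(1) h by (meson less_le_trans less_trans)
      qed
    next
      fix b' assume "ereal (\<phi> lam) < b'"
      then obtain z where z: "ereal z < b'" "\<phi> lam < z" using ereal_dense2 by force
      define \<delta> where "\<delta> = (z - \<phi> lam) / 4"
      have d: "0 < \<delta>" unfolding \<delta>_def using z by simp
      have B': "\<And>n. scgf a M Z JJ n (\<lambda>i\<in>JJ. 2 * lam i) \<le> ereal B" using B unfolding lam2_def .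
      show "eventually (\<lambda>n. scgf a M Z JJ n lam < b') sequentially"
      proof (rule eventually_mono[OF varadhan_upper[OF fin L apos alim prob sb B' d]])
        fix n assume h: "scgf a M Z JJ n lam \<le> ereal (\<phi> lam + 3 * \<delta>)"
        have "z - \<phi> lam = 4 * \<delta>" unfolding \<delta>_def by simp
        then have "\<phi> lam + 3 * \<delta> < z" using d by linarith
        then have "ereal (\<phi> lam + 3 * \<delta>) < ereal z" by simp
        then show "scgf a M Z JJ n lam < b'" using h z(1) by (meson le_less_trans less_trans)
      qed
    qed
  qed
qed

lemma fenchel:
  assumes fin: "finite JJ" and good: "good_rate_function (Rpow JJ) J" and cv: "convex_on_Rpow JJ J"
    and y1: "y1 \<in> topspace (Rpow JJ)" "J y1 < \<infinity>"
    and phi: "\<And>lam. lam \<in> JJ \<rightarrow>\<^sub>E UNIV \<Longrightarrow> ereal (\<phi> lam) = (SUP y\<in>topspace (Rpow JJ). ereal (lin JJ lam y) - J y)"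
    and x: "x \<in> topspace (Rpow JJ)"
  shows "J x = (SUP lam\<in>JJ \<rightarrow>\<^sub>E UNIV. ereal ((\<Sum>I\<in>JJ. lam I * x I) - \<phi> lam))"
proof (rule antisym)
  have nn: "\<And>x. x \<in> topspace (Rpow JJ) \<Longrightarrow> 0 \<le> J x" using good unfolding good_rate_function_def by auto
  show "(SUP lam\<in>JJ \<rightarrow>\<^sub>E UNIV. ereal ((\<Sum>I\<in>JJ. lam I * x I) - \<phi> lam)) \<le> J x"
  proof (rule SUP_least)
    fix lam :: "_ \<Rightarrow> real" assume lam: "lam \<in> JJ \<rightarrow>\<^sub>E UNIV"
    show "ereal ((\<Sum>I\<in>JJ. lam I * x I) - \<phi> lam) \<le> J x"
    proof (cases "J x")
      case (real r)
      have "ereal (lin JJ lam x) - J x \<le> ereal (\<phi> lam)" unfolding phi[OF lam] using x by (rule SUP_upper)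
      then show ?thesis using real unfolding lin_def by simp
    qed (use nn[OF x] in auto)
  qed
  show "J x \<le> (SUP lam\<in>JJ \<rightarrow>\<^sub>E UNIV. ereal ((\<Sum>I\<in>JJ. lam I * x I) - \<phi> lam))"
  proof (rule ccontr)
    assume "\<not> ?thesis"
    then have "(SUP lam\<in>JJ \<rightarrow>\<^sub>E UNIV. ereal ((\<Sum>I\<in>JJ. lam I * x I) - \<phi> lam)) < J x" by simp
    then obtain c where c: "(SUP lam\<in>JJ \<rightarrow>\<^sub>E UNIV. ereal ((\<Sum>I\<in>JJ. lam I * x I) - \<phi> lam)) < ereal c" "ereal c < J x"
      using ereal_dense2 by blast
    obtain lam \<beta> where lam: "lam \<in> JJ \<rightarrow>\<^sub>E UNIV"
      and minor: "\<And>y. y \<in> topspace (Rpow JJ) \<Longrightarrow> ereal ((\<Sum>i\<in>JJ. lam i * y i) + \<beta>) \<le> J y"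
      and cx: "c < (\<Sum>i\<in>JJ. lam i * x i) + \<beta>"
      using affine_minorant[OF fin good cv y1 x c(2)] by blast
    have "(SUP y\<in>topspace (Rpow JJ). ereal (lin JJ lam y) - J y) \<le> ereal (- \<beta>)"
    proof (rule SUP_least)
      fix y assume y: "y \<in> topspace (Rpow JJ)"
      show "ereal (lin JJ lam y) - J y \<le> ereal (- \<beta>)"
        using minor[OF y] nn[OF y] unfolding lin_def by (cases "J y") auto
    qed
    then have "ereal (\<phi> lam) \<le> ereal (- \<beta>)" unfolding phi[OF lam] .
    then have "\<phi> lam \<le> - \<beta>" by simp
    then have "ereal c < ereal ((\<Sum>I\<in>JJ. lam I * x I) - \<phi> lam)" using cx by simp
    also have "\<dots> \<le> (SUP lam\<in>JJ \<rightarrow>\<^sub>E UNIV. ereal ((\<Sum>I\<in>JJ. lam I * x I) - \<phi> lam))"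
      using lam by (rule SUP_upper)
    finally show False using c(1) by simp
  qed
qed



lemma corner_sub: "0 \<le> s \<Longrightarrow> s < t \<Longrightarrow> corner s t \<subseteq> Delta"
  unfolding corner_def Delta_def
  by auto (meson ereal_less_eq(3) less_trans not_le order_le_less_trans ereal_less(2))

lemma closed_prod_Delta_sets:
  assumes "radon_on_Delta \<xi>" "closed C \<or> open C \<or> C \<in> sets borel" "C \<subseteq> Delta"
  shows "C \<in> sets \<xi>"
proof -
  have sx: "sets \<xi> = sets (restrict_space borel Delta)" using assms(1) unfolding radon_on_Delta_def by auto
  have "C \<in> sets borel" using assms(2) by auto
  then have "Delta \<inter> C \<in> sets (restrict_space borel Delta)" unfolding sets_restrict_space by auto
  then show ?thesis using assms(3) sx by (simp add: Int_absorb1)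
qed

lemma corner_borel: "corner s t \<in> sets borel"
proof -
  have c1: "closed {p :: ereal \<times> ereal. 0 \<le> fst p}"
    by (rule closed_Collect_le) (auto intro!: continuous_intros)
  have c2: "closed {p :: ereal \<times> ereal. fst p \<le> ereal s}"
    by (rule closed_Collect_le) (auto intro!: continuous_intros)
  have o3: "open {p :: ereal \<times> ereal. ereal t < snd p}"
    by (rule open_Collect_less) (auto intro!: continuous_intros)
  have "corner s t = {p. 0 \<le> fst p} \<inter> {p. fst p \<le> ereal s} \<inter> {p. ereal t < snd p}"
    unfolding corner_def by auto
  also have "\<dots> \<in> sets borel" using sets.Int[OF sets.Int[OF borel_closed[OF c1] borel_closed[OF c2]] borel_open[OF o3]] .
  finally show ?thesis .
qed

lemma corner_sets:
  assumes r: "radon_on_Delta \<xi>" and st: "0 \<le> s" "s < t"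
  shows "corner s t \<in> sets \<xi>"
  by (rule closed_prod_Delta_sets[OF r _ corner_sub[OF st]]) (simp add: corner_borel)

lemma corner_fin:
  assumes r: "radon_on_Delta \<xi>" and st: "0 \<le> s" "s < t"
  shows "emeasure \<xi> (corner s t) \<noteq> \<infinity>"
proof -
  define K where "K = {ereal 0 .. ereal s} \<times> {ereal t ..}"
  have cK: "compact K" unfolding K_def
    by (intro compact_Times) (auto simp: compact_eq_closed)
  have KD: "K \<subseteq> Delta"
  proof
    fix p assume "p \<in> K"
    then obtain x y where p: "p = (x, y)" "ereal 0 \<le> x" "x \<le> ereal s" "ereal t \<le> y" unfolding K_def by auto
    have "ereal s < ereal t" using st by simp
    with p(3) have "x < ereal t" by (rule le_less_trans)
    then have "x < y" using p(4) by (rule less_le_trans)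
    then show "p \<in> Delta" using p unfolding Delta_def by (simp add: zero_ereal_def)
  qed
  have "closed K" using cK by (rule compact_imp_closed)
  then have Ks: "K \<in> sets \<xi>" using closed_prod_Delta_sets[OF r _ KD] by auto
  have "corner s t \<subseteq> K" unfolding corner_def K_def by (auto simp: less_imp_le zero_ereal_def)
  then have "emeasure \<xi> (corner s t) \<le> emeasure \<xi> K" using Ks by (rule emeasure_mono)
  also have "\<dots> < \<infinity>" using r cK KD unfolding radon_on_Delta_def by blast
  finally show ?thesis by simp
qed



definition dd :: "nat \<Rightarrow> real" where "dd l = (1/2::real) ^ (l + 1)"
definition NN :: "nat \<Rightarrow> nat" where "NN l = l * 2 ^ (l + 1)"
definition Aset :: "nat \<Rightarrow> (real \<times> real) set" where
  "Aset l = insert (0, 1) ((\<lambda>(i, j). (real i * dd l, real j * dd l)) ` {(i, j). 1 \<le> i \<and> i < j \<and> j \<le> NN l})"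
definition mc :: "(ereal \<times> ereal) measure \<Rightarrow> real \<times> real \<Rightarrow> real" where
  "mc \<xi> p = measure \<xi> (corner (fst p) (snd p))"

lemma dd_pos: "0 < dd l" unfolding dd_def by simp

lemma Aset_finite: "finite (Aset l)"
proof -
  have "{(i, j). 1 \<le> i \<and> i < j \<and> j \<le> NN l} \<subseteq> {..NN l} \<times> {..NN l}" by auto
  then have "finite {(i, j). 1 \<le> i \<and> i < j \<and> j \<le> NN l}" by (rule finite_subset) auto
  then show ?thesis unfolding Aset_def by auto
qed

lemma Aset_mem: "1 \<le> i \<Longrightarrow> i < j \<Longrightarrow> j \<le> NN l \<Longrightarrow> (real i * dd l, real j * dd l) \<in> Aset l"
  unfolding Aset_def by (intro insertI2 image_eqI[where x="(i, j)"]) auto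

lemma Aset_ok: "p \<in> Aset l \<Longrightarrow> 0 \<le> fst p \<and> fst p < snd p"
  unfolding Aset_def using dd_pos[of l] by (auto intro!: mult_strict_right_mono)

lemma delta_sum:
  fixes h :: "'a \<Rightarrow> real"
  assumes "finite A" "\<forall>(c, q)\<in>set cs. q \<in> A"
  shows "(\<Sum>p\<in>A. (\<Sum>(c, q)\<leftarrow>cs. if p = q then c else 0) * h p) = (\<Sum>(c, q)\<leftarrow>cs. c * h q)"
  using assms(2)
proof (induction cs)
  case Nil
  then show ?case by simp
next
  case (Cons cq cs)
  obtain c q where cq: "cq = (c, q)" by (cases cq)
  have qA: "q \<in> A" using Cons.prems cq by auto
  have "(\<Sum>p\<in>A. (\<Sum>(c, q)\<leftarrow>cq # cs. if p = q then c else 0) * h p)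
      = (\<Sum>p\<in>A. (if p = q then c * h p else 0)) + (\<Sum>p\<in>A. (\<Sum>(c, q)\<leftarrow>cs. if p = q then c else 0) * h p)"
    unfolding cq sum.distrib[symmetric] by (intro sum.cong) (auto simp: distrib_right)
  also have "(\<Sum>p\<in>A. (if p = q then c * h p else 0)) = c * h q" using qA assms(1) by (simp add: sum.delta')
  also have "(\<Sum>p\<in>A. (\<Sum>(c, q)\<leftarrow>cs. if p = q then c else 0) * h p) = (\<Sum>(c, q)\<leftarrow>cs. c * h q)"
    using Cons by auto
  finally show ?case unfolding cq by simp
qed



lemma corner_anti:
  assumes "s \<le> s'" "t' \<le> t"
  shows "corner s t \<subseteq> corner s' t'"
proof
  fix p assume "p \<in> corner s t"
  then obtain x y where p: "p = (x, y)" "0 \<le> x" "x \<le> ereal s" "ereal t < y" unfolding corner_def by auto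
  have "x \<le> ereal s'" using p(3) assms(1) by (rule order_trans[OF _ iffD2[OF ereal_less_eq(3)]])
  moreover have "ereal t' < y" using assms(2) p(4) by (rule le_less_trans[OF iffD2[OF ereal_less_eq(3)]])
  ultimately show "p \<in> corner s' t'" using p unfolding corner_def by auto
qed

lemma corner_diff_measure:
  assumes r: "radon_on_Delta \<xi>" and "0 \<le> s1" "s1 \<le> s2" "s2 < t"
  shows "measure \<xi> (corner s2 t - corner s1 t) = measure \<xi> (corner s2 t) - measure \<xi> (corner s1 t)"
  using assms
  by (intro measure_Diff corner_fin corner_sets corner_anti) auto

lemma kind1:
  assumes r: "radon_on_Delta \<xi>" and j: "3 \<le> j"
  shows "measure \<xi> ({ereal 0 .. ereal (dd l)} \<times> {ereal ((real j - 1) * dd l) <.. ereal (real j * dd l)})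
      = mc \<xi> (real 1 * dd l, real (j - 1) * dd l) - mc \<xi> (real 1 * dd l, real j * dd l)"
proof -
  define d where "d = dd l"
  have d: "0 < d" unfolding d_def by (rule dd_pos)
  define t1 where "t1 = (real j - 1) * d"
  define t2 where "t2 = real j * d"
  have rj: "real (j - 1) = real j - 1" using j by (simp add: of_nat_diff)
  have dt1: "d < t1" unfolding t1_def using j d by (simp add: mult_less_cancel_right2)
  have t12: "t1 < t2" unfolding t1_def t2_def using d by simp
  have eq: "{ereal 0 .. ereal d} \<times> {ereal t1 <.. ereal t2} = corner d t1 - corner d t2"
    unfolding corner_def by (auto simp: zero_ereal_def not_less)
  have "measure \<xi> (corner d t1 - corner d t2) = measure \<xi> (corner d t1) - measure \<xi> (corner d t2)"
    using d dt1 t12 by (intro measure_Diff corner_fin[OF r] corner_sets[OF r] corner_anti) auto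
  then show ?thesis unfolding mc_def d_def[symmetric] rj t1_def[symmetric] t2_def[symmetric] eq[symmetric]
    by (simp add: t1_def)
qed

lemma kind2:
  assumes r: "radon_on_Delta \<xi>" and ij: "2 \<le> i" "2 \<le> j - i"
  shows "measure \<xi> ({ereal ((real i - 1) * dd l) <.. ereal (real i * dd l)} \<times> {ereal ((real j - 1) * dd l) <.. ereal (real j * dd l)})
      = mc \<xi> (real i * dd l, real (j - 1) * dd l) - mc \<xi> (real (i - 1) * dd l, real (j - 1) * dd l)
        - mc \<xi> (real i * dd l, real j * dd l) + mc \<xi> (real (i - 1) * dd l, real j * dd l)"
proof -
  define d where "d = dd l"
  have d: "0 < d" unfolding d_def by (rule dd_pos)
  have ri: "real (i - 1) = real i - 1" using ij by (simp add: of_nat_diff)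
  have rj: "real (j - 1) = real j - 1" using ij by (simp add: of_nat_diff)
  have jge: "real i + 2 \<le> real j" using ij by linarith
  define s1 where "s1 = (real i - 1) * d"
  define s2 where "s2 = real i * d"
  define t1 where "t1 = (real j - 1) * d"
  define t2 where "t2 = real j * d"
  have s1p: "0 \<le> s1" unfolding s1_def using ij d by simp
  have s12: "s1 \<le> s2" unfolding s1_def s2_def using d by simp
  have "real i < real j - 1" using jge by linarith
  then have s2t1: "s2 < t1" unfolding s2_def t1_def using d by (rule mult_strict_right_mono)
  have t12: "t1 < t2" unfolding t1_def t2_def using d by simp
  define R where "R t = corner s2 t - corner s1 t" for t
  have eq: "{ereal s1 <.. ereal s2} \<times> {ereal t1 <.. ereal t2} = R t1 - R t2"
  proof (intro set_eqI iffI)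
    fix p assume p: "p \<in> {ereal s1 <.. ereal s2} \<times> {ereal t1 <.. ereal t2}"
    then obtain x y where xy: "p = (x, y)" "ereal s1 < x" "x \<le> ereal s2" "ereal t1 < y" "y \<le> ereal t2" by auto
    have "0 \<le> ereal s1" using s1p by simp
    then have "0 \<le> x" using xy(2) by (rule order_trans[OF _ less_imp_le])
    then show "p \<in> R t1 - R t2" using xy unfolding R_def corner_def by (auto simp: not_le not_less)
  next
    fix p assume p: "p \<in> R t1 - R t2"
    obtain x y where xy: "p = (x, y)" by (cases p)
    have h1: "0 \<le> x" "x \<le> ereal s2" "ereal t1 < y" "\<not> x \<le> ereal s1" using p xy unfolding R_def corner_def by auto
    have "\<not> ereal t2 < y" using p xy h1 unfolding R_def corner_def by auto
    then show "p \<in> {ereal s1 <.. ereal s2} \<times> {ereal t1 <.. ereal t2}" using h1 xy by (auto simp: not_le not_less)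
  qed
  have Rs: "R t \<in> sets \<xi>" if "s2 < t" for t
    unfolding R_def using that s1p s12 by (intro sets.Diff corner_sets[OF r]) auto
  have Rm: "measure \<xi> (R t) = measure \<xi> (corner s2 t) - measure \<xi> (corner s1 t)" if "s2 < t" for t
    unfolding R_def using that s1p s12 by (intro corner_diff_measure[OF r]) auto
  have Rsub: "R t2 \<subseteq> R t1"
  proof
    fix p assume p: "p \<in> R t2"
    obtain x y where xy: "p = (x, y)" by (cases p)
    have h1: "0 \<le> x" "x \<le> ereal s2" "ereal t2 < y" "\<not> x \<le> ereal s1" using p xy unfolding R_def corner_def by auto
    have "ereal t1 < ereal t2" using t12 by simp
    then have "ereal t1 < y" using h1(3) by (rule less_trans)
    then show "p \<in> R t1" using h1 xy unfolding R_def corner_def by auto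
  qed
  have fin: "emeasure \<xi> (R t1) \<noteq> \<infinity>"
  proof -
    have "emeasure \<xi> (R t1) \<le> emeasure \<xi> (corner s2 t1)"
      unfolding R_def by (intro emeasure_mono corner_sets[OF r]) (use s1p s12 s2t1 in auto)
    moreover have "emeasure \<xi> (corner s2 t1) \<noteq> \<infinity>" using s1p s12 s2t1 by (intro corner_fin[OF r]) auto
    ultimately show ?thesis by (simp add: neq_top_trans)
  qed
  have "measure \<xi> (R t1 - R t2) = measure \<xi> (R t1) - measure \<xi> (R t2)"
    using fin Rs[OF s2t1] Rs Rsub s2t1 t12 by (intro measure_Diff) auto
  also have "\<dots> = (measure \<xi> (corner s2 t1) - measure \<xi> (corner s1 t1)) - (measure \<xi> (corner s2 t2) - measure \<xi> (corner s1 t2))"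
    using Rm s2t1 t12 by simp
  finally have "measure \<xi> (R t1 - R t2) = (measure \<xi> (corner s2 t1) - measure \<xi> (corner s1 t1)) - (measure \<xi> (corner s2 t2) - measure \<xi> (corner s1 t2))" .
  then have "measure \<xi> ({ereal s1 <.. ereal s2} \<times> {ereal t1 <.. ereal t2}) = (measure \<xi> (corner s2 t1) - measure \<xi> (corner s1 t1)) - (measure \<xi> (corner s2 t2) - measure \<xi> (corner s1 t2))"
    by (simp only: eq)
  then show ?thesis unfolding mc_def ri rj s1_def s2_def t1_def t2_def d_def by simp
qed



lemma rect_repr:
  assumes I: "I \<in> Ilset l"
  shows "\<exists>cs. (\<forall>(c, q)\<in>set cs. q \<in> Aset l) \<and>
      (\<forall>\<xi>. radon_on_Delta \<xi> \<longrightarrow> measure \<xi> I = (\<Sum>(c, q)\<leftarrow>cs. c * mc \<xi> q))"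
proof -
  have "I \<in> {{ereal 0 .. ereal (dd l)} \<times> {ereal ((real j - 1) * dd l) <.. ereal (real j * dd l)} | j::nat.
        3 \<le> j \<and> j \<le> NN l}
     \<union> {{ereal ((real i - 1) * dd l) <.. ereal (real i * dd l)} \<times>
         {ereal ((real j - 1) * dd l) <.. ereal (real j * dd l)} | i j :: nat.
        2 \<le> i \<and> i \<le> j \<and> j \<le> NN l \<and> j - i \<ge> 2}"
    using I unfolding Ilset_def Let_def dd_def NN_def .
  then show ?thesis
  proof (rule UnE)
    assume "I \<in> {{ereal 0 .. ereal (dd l)} \<times> {ereal ((real j - 1) * dd l) <.. ereal (real j * dd l)} | j::nat.
        3 \<le> j \<and> j \<le> NN l}"
    then obtain j where j: "I = {ereal 0 .. ereal (dd l)} \<times> {ereal ((real j - 1) * dd l) <.. ereal (real j * dd l)}"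
      "3 \<le> j" "j \<le> NN l" by auto
    show ?thesis
    proof (intro exI[of _ "[(1, (real 1 * dd l, real (j - 1) * dd l)), (-1, (real 1 * dd l, real j * dd l))]"] conjI allI impI)
      show "\<forall>(c, q)\<in>set [(1, (real 1 * dd l, real (j - 1) * dd l)), (-1, (real 1 * dd l, real j * dd l))]. q \<in> Aset l"
        using j Aset_mem[of 1 "j - 1" l] Aset_mem[of 1 j l] by (auto simp: of_nat_diff)
      fix \<xi> :: "(ereal \<times> ereal) measure" assume "radon_on_Delta \<xi>"
      from kind1[OF this j(2), of l] show "measure \<xi> I = (\<Sum>(c, q)\<leftarrow>[(1, (real 1 * dd l, real (j - 1) * dd l)), (-1, (real 1 * dd l, real j * dd l))]. c * mc \<xi> q)"
        unfolding j(1) by simp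
    qed
  next
    assume "I \<in> {{ereal ((real i - 1) * dd l) <.. ereal (real i * dd l)} \<times>
         {ereal ((real j - 1) * dd l) <.. ereal (real j * dd l)} | i j :: nat.
        2 \<le> i \<and> i \<le> j \<and> j \<le> NN l \<and> j - i \<ge> 2}"
    then obtain i j where ij: "I = {ereal ((real i - 1) * dd l) <.. ereal (real i * dd l)} \<times>
         {ereal ((real j - 1) * dd l) <.. ereal (real j * dd l)}" "2 \<le> i" "i \<le> j" "j \<le> NN l" "2 \<le> j - i"
      by blast
    define cs where "cs = [(1::real, (real i * dd l, real (j - 1) * dd l)), (-1, (real (i - 1) * dd l, real (j - 1) * dd l)),
        (-1, (real i * dd l, real j * dd l)), (1, (real (i - 1) * dd l, real j * dd l))]"
    show ?thesis
    proof (intro exI[of _ cs] conjI allI impI)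
      show "\<forall>(c, q)\<in>set cs. q \<in> Aset l"
        unfolding cs_def using ij Aset_mem[of i "j - 1" l] Aset_mem[of "i - 1" "j - 1" l]
          Aset_mem[of i j l] Aset_mem[of "i - 1" j l] by auto
      fix \<xi> :: "(ereal \<times> ereal) measure" assume "radon_on_Delta \<xi>"
      from kind2[OF this ij(2) ij(5), of l] show "measure \<xi> I = (\<Sum>(c, q)\<leftarrow>cs. c * mc \<xi> q)"
        unfolding ij(1) cs_def by simp
    qed
  qed
qed

lemma Ilset_finite: "finite (Ilset l)"
proof -
  define N where "N = l * 2 ^ (l + 1)"
  define d where "d = (1/2::real) ^ (l + 1)"
  define f1 where "f1 j = {ereal 0 .. ereal d} \<times> {ereal ((real j - 1) * d) <.. ereal (real j * d)}" for j :: nat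
  define f2 where "f2 i j = {ereal ((real i - 1) * d) <.. ereal (real i * d)} \<times>
         {ereal ((real j - 1) * d) <.. ereal (real j * d)}" for i j :: nat
  have "Ilset l \<subseteq> f1 ` {..N} \<union> (\<lambda>(i, j). f2 i j) ` ({..N} \<times> {..N})"
    unfolding Ilset_def Let_def N_def[symmetric] d_def[symmetric] f1_def[symmetric] f2_def[symmetric]
    by force
  then show ?thesis by (rule finite_subset) auto
qed



theorem mainTheorem13:
  fixes a :: "nat \<Rightarrow> real"
    and M :: "nat \<Rightarrow> 'w measure"
    and \<xi> :: "nat \<Rightarrow> 'w \<Rightarrow> (ereal \<times> ereal) measure"
    and l :: nat
    and IP :: "(real \<times> real) list \<Rightarrow> (nat \<Rightarrow> real) \<Rightarrow> ereal"
  assumes a_pos: "\<And>n. 0 < a n"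
    and a_lim: "filterlim a at_top sequentially"
    and proc: "random_radon_process M \<xi>"
    and ldp_fd: "\<And>ps. ps \<noteq> [] \<Longrightarrow> (\<forall>(s, t)\<in>set ps. 0 \<le> s \<and> s < t) \<Longrightarrow>
        LDP_good (Rpow {..<length ps}) a M (\<lambda>n \<omega>. corner_vec ps (\<xi> n \<omega>)) (IP ps)"
  shows "\<exists>Il. LDP_good (Rpow (Ilset l)) a M (\<lambda>n \<omega>. hist l (\<xi> n \<omega>)) Il \<and>
     ((\<forall>ps. ps \<noteq> [] \<and> (\<forall>(s, t)\<in>set ps. 0 \<le> s \<and> s < t) \<longrightarrow>
          unique_zero (Rpow {..<length ps}) (IP ps))
        \<longrightarrow> unique_zero (Rpow (Ilset l)) Il) \<and>
     ((\<forall>ps. ps \<noteq> [] \<and> (\<forall>(s, t)\<in>set ps. 0 \<le> s \<and> s < t) \<longrightarrow>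
          convex_on_Rpow {..<length ps} (IP ps)) \<and>
      (\<forall>lam\<in>Ilset l \<rightarrow>\<^sub>E UNIV.
          (SUP n. scgf a M (\<lambda>n \<omega>. hist l (\<xi> n \<omega>)) (Ilset l) n lam) < \<infinity>)
      \<longrightarrow> (\<exists>\<phi> :: ((ereal \<times> ereal) set \<Rightarrow> real) \<Rightarrow> real.
            (\<forall>lam\<in>Ilset l \<rightarrow>\<^sub>E UNIV.
               (\<lambda>n. scgf a M (\<lambda>n \<omega>. hist l (\<xi> n \<omega>)) (Ilset l) n lam)
                 \<longlonglongrightarrow> ereal (\<phi> lam)) \<and>
            (\<forall>x\<in>topspace (Rpow (Ilset l)).
               Il x = (SUP lam\<in>Ilset l \<rightarrow>\<^sub>E UNIV.
                         ereal ((\<Sum>I\<in>Ilset l. lam I * x I) - \<phi> lam)))))"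
proof -
  have prob: "\<And>n. prob_space (M n)" using proc unfolding random_radon_process_def by auto
  have radon: "\<And>n \<omega>. \<omega> \<in> space (M n) \<Longrightarrow> radon_on_Delta (\<xi> n \<omega>)"
    using proc unfolding random_radon_process_def by auto
  obtain ps where ps: "set ps = Aset l" "distinct ps" using finite_distinct_list[OF Aset_finite] by blast
  have ps_ne: "ps \<noteq> []" using ps(1) unfolding Aset_def by auto
  have ps_ok': "0 \<le> s \<and> s < t" if "(s, t) \<in> set ps" for s t
  proof -
    have "(s, t) \<in> Aset l" using that ps(1) by simp
    from Aset_ok[OF this] show ?thesis by simp
  qed
  have ps_ok: "\<forall>(s, t)\<in>set ps. 0 \<le> s \<and> s < t" using ps_ok' by auto
  have "\<forall>I\<in>Ilset l. \<exists>cs. (\<forall>(c, q)\<in>set cs. q \<in> Aset l) \<and>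
      (\<forall>\<xi>. radon_on_Delta \<xi> \<longrightarrow> measure \<xi> I = (\<Sum>(c, q)\<leftarrow>cs. c * mc \<xi> q))"
    using rect_repr by blast
  from bchoice[OF this] obtain cs where cs: "\<forall>I\<in>Ilset l. (\<forall>(c, q)\<in>set (cs I). q \<in> Aset l) \<and>
      (\<forall>\<xi>. radon_on_Delta \<xi> \<longrightarrow> measure \<xi> I = (\<Sum>(c, q)\<leftarrow>cs I. c * mc \<xi> q))" by blast
  define g where "g I p = (\<Sum>(c, q)\<leftarrow>cs I. if p = q then c else 0)" for I p
  define f where "f x = (\<lambda>I\<in>Ilset l. \<Sum>k<length ps. g I (ps ! k) * x k)" for x :: "nat \<Rightarrow> real"
  have histf: "hist l \<eta> = f (corner_vec ps \<eta>)" if r: "radon_on_Delta \<eta>" for \<eta>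
  proof (rule ext)
    fix I
    show "hist l \<eta> I = f (corner_vec ps \<eta>) I"
    proof (cases "I \<in> Ilset l")
      case True
      have "f (corner_vec ps \<eta>) I = (\<Sum>k<length ps. g I (ps ! k) * corner_vec ps \<eta> k)"
        unfolding f_def using True by simp
      also have "\<dots> = (\<Sum>k<length ps. g I (ps ! k) * mc \<eta> (ps ! k))"
        by (intro sum.cong) (auto simp: corner_vec_def mc_def)
      also have "\<dots> = (\<Sum>p\<in>set ps. g I p * mc \<eta> p)"
        by (rule sum.reindex_bij_betw[OF bij_betw_nth[OF ps(2) refl refl]])
      also have "\<dots> = (\<Sum>(c, q)\<leftarrow>cs I. c * mc \<eta> q)"
        unfolding ps(1) g_def using True cs by (intro delta_sum Aset_finite) auto
      also have "\<dots> = measure \<eta> I" using True cs r by auto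
      finally show ?thesis unfolding hist_def using True by simp
    next
      case False
      then show ?thesis unfolding hist_def f_def by simp
    qed
  qed
  have fcont: "continuous_map (Rpow {..<length ps}) (Rpow (Ilset l)) f"
  proof -
    have c: "continuous_map (Rpow {..<length ps}) euclideanreal (\<lambda>x. \<Sum>k<length ps. g I (ps ! k) * x k)" for I
      by (intro continuous_map_sum continuous_map_real_mult continuous_map_product_projection
          continuous_map_const[THEN iffD2]) auto
    show ?thesis unfolding continuous_map_componentwise
      using c by (auto simp: f_def)
  qed
  have Haus: "Hausdorff_space (Rpow (Ilset l))" by (simp add: Hausdorff_space_product_topology)
  have LDPps: "LDP_good (Rpow {..<length ps}) a M (\<lambda>n \<omega>. corner_vec ps (\<xi> n \<omega>)) (IP ps)"
    by (rule ldp_fd[OF ps_ne ps_ok])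
  have goodIP: "good_rate_function (Rpow {..<length ps}) (IP ps)" using LDPps unfolding LDP_good_def by auto
  define Il where "Il y = (INF x\<in>{x\<in>topspace (Rpow {..<length ps}). f x = y}. IP ps x)" for y
  have LDPh: "LDP_good (Rpow (Ilset l)) a M (\<lambda>n \<omega>. hist l (\<xi> n \<omega>)) Il"
    unfolding Il_def by (rule contraction[OF LDPps fcont Haus]) (simp add: histf radon)
  have goodIl: "good_rate_function (Rpow (Ilset l)) Il" and LIl: "LDP (Rpow (Ilset l)) a M (\<lambda>n \<omega>. hist l (\<xi> n \<omega>)) Il"
    using LDPh unfolding LDP_good_def by auto
  have lin: "f (\<lambda>i\<in>{..<length ps}. t * x i + (1 - t) * y i) = (\<lambda>I\<in>Ilset l. t * f x I + (1 - t) * f y I)"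
    if "x \<in> {..<length ps} \<rightarrow>\<^sub>E UNIV" "y \<in> {..<length ps} \<rightarrow>\<^sub>E UNIV" for x y t
  proof (rule ext)
    fix I
    show "f (\<lambda>i\<in>{..<length ps}. t * x i + (1 - t) * y i) I = (\<lambda>I\<in>Ilset l. t * f x I + (1 - t) * f y I) I"
    proof (cases "I \<in> Ilset l")
      case True
      have "(\<Sum>k<length ps. g I (ps ! k) * (\<lambda>i\<in>{..<length ps}. t * x i + (1 - t) * y i) k)
          = (\<Sum>k<length ps. t * (g I (ps ! k) * x k) + (1 - t) * (g I (ps ! k) * y k))"
        by (intro sum.cong) (auto simp: algebra_simps)
      also have "\<dots> = t * (\<Sum>k<length ps. g I (ps ! k) * x k) + (1 - t) * (\<Sum>k<length ps. g I (ps ! k) * y k)"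
        by (simp add: sum.distrib sum_distrib_left)
      finally have sc: "(\<Sum>k<length ps. g I (ps ! k) * (\<lambda>i\<in>{..<length ps}. t * x i + (1 - t) * y i) k)
          = t * (\<Sum>k<length ps. g I (ps ! k) * x k) + (1 - t) * (\<Sum>k<length ps. g I (ps ! k) * y k)" .
      show ?thesis unfolding f_def using True sc by (simp only: restrict_apply if_True)
    next
      case False
      then show ?thesis unfolding f_def by simp
    qed
  qed
  show ?thesis
  proof (intro exI[of _ Il] conjI impI)
    show "LDP_good (Rpow (Ilset l)) a M (\<lambda>n \<omega>. hist l (\<xi> n \<omega>)) Il" by (rule LDPh)
  next
    assume "\<forall>ps. ps \<noteq> [] \<and> (\<forall>(s, t)\<in>set ps. 0 \<le> s \<and> s < t) \<longrightarrow> unique_zero (Rpow {..<length ps}) (IP ps)"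
    then have uz: "unique_zero (Rpow {..<length ps}) (IP ps)" using ps_ne ps_ok by blast
    show "unique_zero (Rpow (Ilset l)) Il"
      unfolding Il_def by (rule contraction_unique_zero[OF goodIP fcont Haus uz])
  next
    assume h: "(\<forall>ps. ps \<noteq> [] \<and> (\<forall>(s, t)\<in>set ps. 0 \<le> s \<and> s < t) \<longrightarrow> convex_on_Rpow {..<length ps} (IP ps)) \<and>
      (\<forall>lam\<in>Ilset l \<rightarrow>\<^sub>E UNIV. (SUP n. scgf a M (\<lambda>n \<omega>. hist l (\<xi> n \<omega>)) (Ilset l) n lam) < \<infinity>)"
    then have cvIP: "convex_on_Rpow {..<length ps} (IP ps)" using ps_ne ps_ok by blast
    have mom: "\<forall>lam\<in>Ilset l \<rightarrow>\<^sub>E UNIV. (SUP n. scgf a M (\<lambda>n \<omega>. hist l (\<xi> n \<omega>)) (Ilset l) n lam) < \<infinity>"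
      using h by blast
    have cv: "convex_on_Rpow (Ilset l) Il"
      unfolding Il_def by (rule contraction_convex[OF goodIP fcont cvIP lin])
    obtain \<phi> where phi: "\<forall>lam\<in>Ilset l \<rightarrow>\<^sub>E UNIV. (\<lambda>n. scgf a M (\<lambda>n \<omega>. hist l (\<xi> n \<omega>)) (Ilset l) n lam) \<longlonglongrightarrow> ereal (\<phi> lam) \<and>
      ereal (\<phi> lam) = (SUP y\<in>topspace (Rpow (Ilset l)). ereal (lin (Ilset l) lam y) - Il y)"
      using varadhan[OF Ilset_finite LDPh a_pos a_lim prob mom] by blast
    obtain y1 where y1: "y1 \<in> topspace (Rpow (Ilset l))" "Il y1 < 1" using rate_dom[OF LIl prob] by blast
    have y1': "Il y1 < \<infinity>" using y1(2) by (cases "Il y1") auto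
    show "\<exists>\<phi> :: ((ereal \<times> ereal) set \<Rightarrow> real) \<Rightarrow> real.
            (\<forall>lam\<in>Ilset l \<rightarrow>\<^sub>E UNIV.
               (\<lambda>n. scgf a M (\<lambda>n \<omega>. hist l (\<xi> n \<omega>)) (Ilset l) n lam)
                 \<longlonglongrightarrow> ereal (\<phi> lam)) \<and>
            (\<forall>x\<in>topspace (Rpow (Ilset l)).
               Il x = (SUP lam\<in>Ilset l \<rightarrow>\<^sub>E UNIV.
                         ereal ((\<Sum>I\<in>Ilset l. lam I * x I) - \<phi> lam)))"
    proof (intro exI[of _ \<phi>] conjI ballI)
      fix lam assume "lam \<in> Ilset l \<rightarrow>\<^sub>E (UNIV :: real set)"
      then show "(\<lambda>n. scgf a M (\<lambda>n \<omega>. hist l (\<xi> n \<omega>)) (Ilset l) n lam) \<longlonglongrightarrow> ereal (\<phi> lam)"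
        using phi by blast
    next
      fix x assume x: "x \<in> topspace (Rpow (Ilset l))"
      show "Il x = (SUP lam\<in>Ilset l \<rightarrow>\<^sub>E UNIV. ereal ((\<Sum>I\<in>Ilset l. lam I * x I) - \<phi> lam))"
        by (rule fenchel[OF Ilset_finite goodIl cv y1(1) y1' _ x]) (use phi in blast)
    qed
  qed
qed



end
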